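(* Let $n\ge 1$ and let $k_1<k_2<\cdots<k_n$ be integers. Then the number of monotone triangles with $n$ rows and bottom row $(k_1,k_2,\ldots,k_n)$ is equal to the value at $(x_1,\ldots,x_n)=(k_1,\ldots,k_n)$ of the polynomial $$\left( \prod_{1 \le p < q \le n} \left( \operatorname{id} + E_{x_p} \Delta_{x_q} \right) \right) \prod_{1 \le i < j \le n} \frac{x_j - x_i}{j-i}.$$
   Context: A monotone triangle with $n$ rows is a triangular array $(a_{i,j})_{1\le j\le i\le n}$ of integers such that $a_{i,j}\le a_{i-1,j}\le a_{i,j+1}$ and $a_{i,j}<a_{i,j+1}$ whenever the indices are in range; its bottom row is $(a_{n,1},\ldots,a_{n,n})$. For a variable $x$, $E_x$ is the shift operator on polynomials, $E_x\,p(x)=p(x+1)$ (other variables fixed), and $\Delta_x=E_x-\operatorname{id}$ is the difference operator. Products of operators denote composition; the operators $E_{x_p},\Delta_{x_q}$ all commute, so the order of the factors is irrelevant. The operator is applied to the polynomial in $x_1,\ldots,x_n$ and the result is then evaluated at $x_i=k_i$. *)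

theory Defs
  imports Complex_Main
begin

text \<open>Monotone triangle with n rows, entries a i j for 1 \<le> j \<le> i \<le> n;
  entries outside this index range are normalised to 0 so that triangles
  correspond bijectively to such functions.\<close>
definition monotone_triangle :: "nat \<Rightarrow> (nat \<Rightarrow> nat \<Rightarrow> int) \<Rightarrow> bool" where
  "monotone_triangle n a \<longleftrightarrow>
     (\<forall>i j. \<not> (1 \<le> j \<and> j \<le> i \<and> i \<le> n) \<longrightarrow> a i j = 0) \<and>
     (\<forall>i j. 2 \<le> i \<and> i \<le> n \<and> 1 \<le> j \<and> j \<le> i - 1 \<longrightarrow>
             a i j \<le> a (i - 1) j \<and> a (i - 1) j \<le> a i (j + 1)) \<and>
     (\<forall>i j. 1 \<le> j \<and> j < i \<and> i \<le> n \<longrightarrow> a i j < a i (j + 1))"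

definition monotone_triangles :: "nat \<Rightarrow> (nat \<Rightarrow> int) \<Rightarrow> (nat \<Rightarrow> nat \<Rightarrow> int) set" where
  "monotone_triangles n k = {a. monotone_triangle n a \<and> (\<forall>j\<in>{1..n}. a n j = k j)}"

definition shiftE :: "nat \<Rightarrow> ((nat \<Rightarrow> real) \<Rightarrow> real) \<Rightarrow> ((nat \<Rightarrow> real) \<Rightarrow> real)" where
  "shiftE p f = (\<lambda>x. f (x(p := x p + 1)))"

definition diffD :: "nat \<Rightarrow> ((nat \<Rightarrow> real) \<Rightarrow> real) \<Rightarrow> ((nat \<Rightarrow> real) \<Rightarrow> real)" where
  "diffD p f = (\<lambda>x. shiftE p f x - f x)"

definition opPQ :: "nat \<Rightarrow> nat \<Rightarrow> ((nat \<Rightarrow> real) \<Rightarrow> real) \<Rightarrow> ((nat \<Rightarrow> real) \<Rightarrow> real)" where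
  "opPQ p q f = (\<lambda>x. f x + shiftE p (diffD q f) x)"

definition fischer_op :: "nat \<Rightarrow> ((nat \<Rightarrow> real) \<Rightarrow> real) \<Rightarrow> ((nat \<Rightarrow> real) \<Rightarrow> real)" where
  "fischer_op n = foldr (\<lambda>(p, q) g. opPQ p q \<circ> g)
                     [(p, q). p \<leftarrow> [1..<n+1], q \<leftarrow> [p+1..<n+1]] id"

definition vdm :: "nat \<Rightarrow> (nat \<Rightarrow> real) \<Rightarrow> real" where
  "vdm n x = (\<Prod>(i, j)\<in>{(i, j). 1 \<le> i \<and> i < j \<and> j \<le> n}.
                 (x j - x i) / (real j - real i))"

end

theory Submission
  imports Defs "HOL-Library.Multiset" "Jordan_Normal_Form.Determinant"
begin


section \<open>Operator algebra\<close>

lemma shiftE_comm: "shiftE p (shiftE q f) = shiftE q (shiftE p f)"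
  by (cases "p = q") (auto simp: shiftE_def fun_upd_twist intro!: ext)

lemma shiftE_add: "shiftE p (\<lambda>x. f x + g x) = (\<lambda>x. shiftE p f x + shiftE p g x)"
  and shiftE_diff: "shiftE p (\<lambda>x. f x - g x) = (\<lambda>x. shiftE p f x - shiftE p g x)"
  and shiftE_scale: "shiftE p (\<lambda>x. c * f x) = (\<lambda>x. c * shiftE p f x)"
  and shiftE_neg: "shiftE p (\<lambda>x. - f x) = (\<lambda>x. - shiftE p f x)"
  by (auto simp: shiftE_def)

lemma opPQ_alt: "opPQ p q f = (\<lambda>x. f x + shiftE p (shiftE q f) x - shiftE p f x)"
  by (auto simp: opPQ_def diffD_def shiftE_def)

lemma diffD_alt: "diffD p f = (\<lambda>x. shiftE p f x - f x)"
  by (simp add: diffD_def)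

lemma opPQ_comm: "opPQ a b (opPQ c d f) = opPQ c d (opPQ a b f)"
  apply (simp only: opPQ_alt shiftE_add shiftE_diff)
  apply (rule ext)
  apply (simp add: shiftE_comm algebra_simps)
  done

lemma opPQ_shiftE_comm: "opPQ a b (shiftE p f) = shiftE p (opPQ a b f)"
  apply (simp only: opPQ_alt shiftE_add shiftE_diff)
  apply (rule ext)
  apply (simp add: shiftE_comm algebra_simps)
  done

lemma opPQ_diffD_comm: "opPQ a b (diffD p f) = diffD p (opPQ a b f)"
  apply (simp only: opPQ_alt diffD_alt shiftE_add shiftE_diff)
  apply (rule ext)
  apply (simp add: shiftE_comm algebra_simps)
  done

lemma diffD_comm: "diffD a (diffD b f) = diffD b (diffD a f)"
  apply (simp only: diffD_alt shiftE_add shiftE_diff)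
  apply (rule ext)
  apply (simp add: shiftE_comm algebra_simps)
  done

lemma diffD_shiftE_comm: "diffD a (shiftE b f) = shiftE b (diffD a f)"
  apply (simp only: diffD_alt shiftE_add shiftE_diff)
  apply (rule ext)
  apply (simp add: shiftE_comm algebra_simps)
  done

definition pairs :: "nat \<Rightarrow> (nat \<times> nat) list" where
  "pairs n = [(p, q). p \<leftarrow> [1..<n+1], q \<leftarrow> [p+1..<n+1]]"

definition opl :: "(nat \<times> nat) list \<Rightarrow> ((nat \<Rightarrow> real) \<Rightarrow> real) \<Rightarrow> ((nat \<Rightarrow> real) \<Rightarrow> real)" where
  "opl ps = foldr (\<circ>) (map (\<lambda>(p,q). opPQ p q) ps) id"

lemma foldr_pairs_opl: "foldr (\<lambda>(p, q) g. opPQ p q \<circ> g) ps id = opl ps"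
  unfolding opl_def by (induction ps) auto

lemma fischer_op_opl: "fischer_op n = opl (pairs n)"
  unfolding fischer_op_def pairs_def foldr_pairs_opl ..

lemma opl_Nil[simp]: "opl [] f = f" and opl_Cons[simp]: "opl ((p,q) # ps) f = opPQ p q (opl ps f)"
  by (auto simp: opl_def)

lemma opl_append: "opl (xs @ ys) f = opl xs (opl ys f)"
  by (induction xs) auto

lemma opl_commute: "opPQ p q (opl ps f) = opl ps (opPQ p q f)"
  by (induction ps) (auto simp: opPQ_comm)

lemma opl_mset: "mset ps = mset qs \<Longrightarrow> opl ps f = opl qs f"
proof (induction ps arbitrary: qs f)
  case Nil then show ?case by (cases qs) auto
next
  case (Cons pq ps)
  obtain p q where pq: "pq = (p,q)" by fastforce
  have "pq \<in> set qs" using Cons.prems by (metis list.set_intros(1) set_mset_mset)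
  then obtain us vs where qs: "qs = us @ pq # vs" by (meson split_list)
  have m: "mset ps = mset (us @ vs)" using Cons.prems qs by simp
  have "opl qs f = opl us (opPQ p q (opl vs f))" by (simp add: qs pq opl_append)
  also have "\<dots> = opPQ p q (opl (us @ vs) f)" by (simp add: opl_commute opl_append)
  also have "\<dots> = opPQ p q (opl ps f)" using Cons.IH[OF m] by simp
  finally show ?case by (simp add: pq)
qed

lemma set_pairs: "set (pairs n) = {(p,q). 1 \<le> p \<and> p < q \<and> q \<le> n}"
proof
  show "set (pairs n) \<subseteq> {(p,q). 1 \<le> p \<and> p < q \<and> q \<le> n}"
    unfolding pairs_def by auto
next
  show "{(p,q). 1 \<le> p \<and> p < q \<and> q \<le> n} \<subseteq> set (pairs n)"
  proof
    fix pq assume "pq \<in> {(p,q). 1 \<le> p \<and> p < q \<and> q \<le> n}"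
    then obtain a b where ab: "pq = (a,b)" "1 \<le> a" "a < b" "b \<le> n" by auto
    have "(a,b) \<in> set (map (Pair a) [a+1..<n+1])" using ab by auto
    moreover have "a \<in> set [1..<n+1]" using ab by simp
    ultimately show "pq \<in> set (pairs n)" unfolding pairs_def ab(1) set_concat by auto
  qed
qed

lemma distinct_concat_pairs: "distinct xs \<Longrightarrow> (\<And>p. distinct (f p)) \<Longrightarrow> distinct (concat (map (\<lambda>p. map (Pair p) (f p)) xs))"
  by (induction xs) (auto simp: distinct_map inj_on_def)

lemma distinct_pairs: "distinct (pairs n)"
  unfolding pairs_def by (rule distinct_concat_pairs) auto

lemma opl_shiftE: "opl ps (shiftE p f) = shiftE p (opl ps f)"
  by (induction ps) (auto simp: opPQ_shiftE_comm)

lemma opl_diffD: "opl ps (diffD p f) = diffD p (opl ps f)"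
  by (induction ps) (auto simp: opPQ_diffD_comm)

definition linop :: "(((nat \<Rightarrow> real) \<Rightarrow> real) \<Rightarrow> ((nat \<Rightarrow> real) \<Rightarrow> real)) \<Rightarrow> bool" where
  "linop T \<longleftrightarrow> (\<forall>f g. T (\<lambda>x. f x + g x) = (\<lambda>x. T f x + T g x)) \<and> (\<forall>c f. T (\<lambda>x. c * f x) = (\<lambda>x. c * T f x))"

lemma linop_opPQ: "linop (opPQ p q)"
  unfolding linop_def opPQ_alt by (auto simp: shiftE_add shiftE_scale algebra_simps)

lemma linop_opl: "linop (opl ps)"
proof (induction ps)
  case Nil then show ?case by (simp add: linop_def)
next
  case (Cons pq ps)
  obtain p q where pq: "pq = (p,q)" by fastforce
  from Cons linop_opPQ[of p q] show ?case unfolding linop_def pq by simp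
qed

lemma linop_neg: "linop T \<Longrightarrow> T (\<lambda>x. - f x) = (\<lambda>x. - T f x)"
proof -
  assume a: "linop T"
  have sc: "\<And>c f. T (\<lambda>x. c * f x) = (\<lambda>x. c * T f x)" using a unfolding linop_def by blast
  show ?thesis using sc[of "-1" f] by simp
qed

lemma linop_zero: "linop T \<Longrightarrow> T (\<lambda>x. 0) = (\<lambda>x. 0)"
proof -
  assume a: "linop T"
  have sc: "\<And>c f. T (\<lambda>x. c * f x) = (\<lambda>x. c * T f x)" using a unfolding linop_def by blast
  show ?thesis using sc[of 0 "\<lambda>x. 0"] by simp
qed

lemma linop_sum: assumes "linop T" "finite S"
  shows "T (\<lambda>x. \<Sum>r\<in>S. f r x) = (\<lambda>x. \<Sum>r\<in>S. T (f r) x)"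
  using assms(2)
proof (induction S rule: finite_induct)
  case empty then show ?case using linop_zero[OF assms(1)] by simp
next
  case (insert a S)
  have "T (\<lambda>x. \<Sum>r\<in>insert a S. f r x) = T (\<lambda>x. f a x + (\<Sum>r\<in>S. f r x))"
    using insert by simp
  also have "\<dots> = (\<lambda>x. T (f a) x + T (\<lambda>x. \<Sum>r\<in>S. f r x) x)"
  proof -
    have ad: "\<And>f g. T (\<lambda>x. f x + g x) = (\<lambda>x. T f x + T g x)" using assms(1) unfolding linop_def by blast
    show ?thesis using ad[of "f a" "\<lambda>x. \<Sum>r\<in>S. f r x"] by simp
  qed
  finally show ?case using insert by simp
qed

lemma linop_scale: "linop T \<Longrightarrow> T (\<lambda>x. c * f x) = (\<lambda>x. c * T f x)"
  unfolding linop_def by blast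

definition depon :: "nat set \<Rightarrow> ((nat \<Rightarrow> real) \<Rightarrow> real) \<Rightarrow> bool" where
  "depon S f \<longleftrightarrow> (\<forall>x y. (\<forall>i\<in>S. x i = y i) \<longrightarrow> f x = f y)"

lemma depon_shiftE: "depon S f \<Longrightarrow> depon S (shiftE p f)"
  unfolding depon_def shiftE_def
proof (intro allI impI)
  fix x y :: "nat \<Rightarrow> real"
  assume f: "\<forall>x y. (\<forall>i\<in>S. x i = y i) \<longrightarrow> f x = f y" and xy: "\<forall>i\<in>S. x i = y i"
  have "\<forall>i\<in>S. (x(p := x p + 1)) i = (y(p := y p + 1)) i" using xy by auto
  then show "f (x(p := x p + 1)) = f (y(p := y p + 1))" using f by blast
qed

lemma depon_lin: "depon S f \<Longrightarrow> depon S g \<Longrightarrow> depon S h \<Longrightarrow> depon S (\<lambda>x. f x + g x - h x)"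
  unfolding depon_def by metis

lemma depon_opPQ: "depon S f \<Longrightarrow> depon S (opPQ p q f)"
  unfolding opPQ_alt by (intro depon_lin depon_shiftE)

lemma depon_opl: "depon S f \<Longrightarrow> depon S (opl ps f)"
  by (induction ps) (auto intro: depon_opPQ)


subsection \<open>Conjugation by a swap of adjacent coordinates\<close>

definition sw :: "nat \<Rightarrow> (nat \<Rightarrow> real) \<Rightarrow> (nat \<Rightarrow> real)" where
  "sw i x = x(i := x (Suc i), Suc i := x i)"

definition tau :: "nat \<Rightarrow> nat \<Rightarrow> nat" where
  "tau i p = (if p = i then Suc i else if p = Suc i then i else p)"

lemma sw_upd: "sw i (x(p := v)) = (sw i x)(tau i p := v)"
  by (auto simp: sw_def tau_def fun_eq_iff)

lemma sw_at: "sw i x (tau i p) = x p"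
  by (auto simp: sw_def tau_def)

lemma shiftE_sw: "shiftE p (\<lambda>x. G (sw i x)) = (\<lambda>x. shiftE (tau i p) G (sw i x))"
  by (auto simp: shiftE_def sw_upd sw_at)

lemma opPQ_sw: "opPQ p q (\<lambda>x. G (sw i x)) = (\<lambda>x. opPQ (tau i p) (tau i q) G (sw i x))"
  unfolding opPQ_alt shiftE_sw by (simp add: shiftE_sw)

lemma opl_sw: "opl ps (\<lambda>x. G (sw i x)) = (\<lambda>x. opl (map (\<lambda>(p,q). (tau i p, tau i q)) ps) G (sw i x))"
proof (induction ps)
  case Nil then show ?case by simp
next
  case (Cons pq ps)
  obtain p q where pq: "pq = (p,q)" by fastforce
  show ?case by (simp add: pq Cons opPQ_sw)
qed

lemma linop_comp: "linop S \<Longrightarrow> linop T \<Longrightarrow> linop (\<lambda>f. S (T f))"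
  unfolding linop_def by simp

lemma mset_swap_pairs:
  assumes "1 \<le> i" "Suc i \<le> m"
  shows "mset ((i, Suc i) # map (\<lambda>(p,q). (tau i p, tau i q)) (pairs m)) = mset ((Suc i, i) # pairs m)"
proof -
  let ?t = "\<lambda>(p,q). (tau i p, tau i q)"
  have inv: "\<And>p. tau i (tau i p) = p" by (simp add: tau_def)
  have inv2: "\<And>pq. ?t (?t pq) = pq" using inv by auto
  have inj: "inj ?t"
  proof (rule injI)
    fix a b assume "?t a = ?t b"
    then have "?t (?t a) = ?t (?t b)" by simp
    then show "a = b" by (simp only: inv2)
  qed
  have nin: "(i, Suc i) \<notin> set (map ?t (pairs m))"
  proof
    assume "(i, Suc i) \<in> set (map ?t (pairs m))"
    then obtain pq where pq: "pq \<in> set (pairs m)" "?t pq = (i, Suc i)" by auto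
    then have "?t (?t pq) = ?t (i, Suc i)" by simp
    then have "pq = ?t (i, Suc i)" by (simp only: inv2)
    then have "pq = (Suc i, i)" by (simp add: tau_def)
    then show False using pq by (simp add: set_pairs)
  qed
  have d1: "distinct ((i, Suc i) # map ?t (pairs m))"
    using distinct_pairs[of m] inj nin
    by (simp add: distinct_map inj_on_subset[OF inj])
  have d2: "distinct ((Suc i, i) # pairs m)"
    using distinct_pairs[of m] by (auto simp: set_pairs)
  have s: "set ((i, Suc i) # map ?t (pairs m)) = set ((Suc i, i) # pairs m)"
  proof
    show "set ((i, Suc i) # map ?t (pairs m)) \<subseteq> set ((Suc i, i) # pairs m)"
      using assms by (auto simp: set_pairs tau_def)
  next
    show "set ((Suc i, i) # pairs m) \<subseteq> set ((i, Suc i) # map ?t (pairs m))"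
    proof
      fix pq assume "pq \<in> set ((Suc i, i) # pairs m)"
      then consider "pq = (Suc i, i)" | p q where "pq = (p,q)" "1 \<le> p" "p < q" "q \<le> m"
        by (auto simp: set_pairs)
      then show "pq \<in> set ((i, Suc i) # map ?t (pairs m))"
      proof cases
        case 1
        have mem: "(i, Suc i) \<in> set (pairs m)" using assms by (auto simp: set_pairs)
        have "(Suc i, i) = ?t (i, Suc i)" by (simp add: tau_def)
        then have "(Suc i, i) \<in> set (map ?t (pairs m))" using mem unfolding set_map by (rule image_eqI)
        then show ?thesis using 1 by simp
      next
        case 2
        show ?thesis
        proof (cases "pq = (i, Suc i)")
          case True then show ?thesis by simp
        next
          case False
          have mem: "(tau i p, tau i q) \<in> set (pairs m)"
            using 2 False assms by (auto simp: set_pairs tau_def)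
          have "(p, q) = ?t (tau i p, tau i q)" by (simp add: inv)
          then have "(p, q) \<in> set (map ?t (pairs m))" using mem unfolding set_map by (rule image_eqI)
          then show ?thesis using 2 by simp
        qed
      qed
    qed
  qed
  show ?thesis using s unfolding set_eq_iff_mset_eq_distinct[OF d1 d2] .
qed

lemma KP_opl:
  assumes i: "1 \<le> i" "Suc i \<le> m"
    and anti: "\<And>x. G (sw i x) = - G x"
    and xi: "x i = x (Suc i)"
  shows "opPQ (Suc i) i (opl (pairs m) G) x = 0"
proof -
  let ?t = "\<lambda>(p,q). (tau i p, tau i q)"
  define Op where "Op = (\<lambda>H. opPQ (Suc i) i (opl (pairs m) H))"
  have linO: "linop Op" unfolding Op_def
    using linop_comp[of "opPQ (Suc i) i" "opl (pairs m)", OF linop_opPQ linop_opl] .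
  have "Op (\<lambda>x. G (sw i x)) = (\<lambda>x. opPQ i (Suc i) (opl (map ?t (pairs m)) G) (sw i x))"
  proof -
    have t1: "tau i (Suc i) = i" and t2: "tau i i = Suc i" by (simp_all add: tau_def)
    show ?thesis
      by (simp only: Op_def opl_sw opPQ_sw[of "Suc i" i "opl (map ?t (pairs m)) G"] t1 t2)
  qed
  also have "\<dots> = (\<lambda>x. opl ((i, Suc i) # map ?t (pairs m)) G (sw i x))" by simp
  also have "\<dots> = (\<lambda>x. opl ((Suc i, i) # pairs m) G (sw i x))"
    using opl_mset[OF mset_swap_pairs[OF i]] by simp
  also have "\<dots> = (\<lambda>x. Op G (sw i x))" by (simp add: Op_def)
  finally have e1: "Op (\<lambda>x. G (sw i x)) = (\<lambda>x. Op G (sw i x))" .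
  have "Op (\<lambda>x. G (sw i x)) = Op (\<lambda>x. - G x)" using anti by simp
  also have "\<dots> = (\<lambda>x. - Op G x)" by (rule linop_neg[OF linO])
  finally have "(\<lambda>x. Op G (sw i x)) = (\<lambda>x. - Op G x)" using e1 by simp
  then have "Op G (sw i x) = - Op G x" by (metis)
  moreover have "sw i x = x" using xi by (auto simp: sw_def fun_eq_iff)
  ultimately show ?thesis unfolding Op_def by simp
qed


subsection \<open>Functions not depending on one coordinate\<close>

definition insf :: "nat \<Rightarrow> (nat \<Rightarrow> real) \<Rightarrow> (nat \<Rightarrow> real)" where
  "insf r x = (\<lambda>i. if i < r then x i else x (Suc i))"

definition up :: "nat \<Rightarrow> nat \<Rightarrow> nat" where
  "up r p = (if p < r then p else Suc p)"

lemma insf_upd: "insf r (x(up r p := v)) = (insf r x)(p := v)"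
  by (auto simp: insf_def up_def fun_eq_iff)

lemma insf_at: "insf r x p = x (up r p)"
  by (auto simp: insf_def up_def)

lemma insf_upd_r: "insf r (x(r := v)) = insf r x"
  by (auto simp: insf_def fun_eq_iff)

lemma shiftE_insf: "shiftE (up r p) (\<lambda>x. G (insf r x)) = (\<lambda>x. shiftE p G (insf r x))"
  by (auto simp: shiftE_def insf_upd insf_at)

lemma shiftE_insf_r: "shiftE r (\<lambda>x. G (insf r x)) = (\<lambda>x. G (insf r x))"
  by (auto simp: shiftE_def insf_upd_r)

lemma opPQ_insf: "opPQ (up r p) (up r q) (\<lambda>x. G (insf r x)) = (\<lambda>x. opPQ p q G (insf r x))"
  unfolding opPQ_alt by (simp add: shiftE_insf)

lemma opPQ_insf_r2: "opPQ p r (\<lambda>x. G (insf r x)) = (\<lambda>x. G (insf r x))"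
  unfolding opPQ_alt by (simp add: shiftE_insf_r)

lemma opPQ_insf_r1: "opPQ r (up r q) (\<lambda>x. G (insf r x)) = (\<lambda>x. shiftE q G (insf r x))"
  unfolding opPQ_alt by (simp add: shiftE_insf shiftE_insf_r)

definition shl :: "nat list \<Rightarrow> ((nat \<Rightarrow> real) \<Rightarrow> real) \<Rightarrow> ((nat \<Rightarrow> real) \<Rightarrow> real)" where
  "shl qs G = foldr shiftE qs G"

lemma shl_Nil[simp]: "shl [] G = G" and shl_Cons[simp]: "shl (q # qs) G = shiftE q (shl qs G)"
  by (auto simp: shl_def)

lemma opl_shl: "opl ps (shl qs G) = shl qs (opl ps G)"
  by (induction qs) (auto simp: opl_shiftE)

lemma shl_eval: "distinct qs \<Longrightarrow> shl qs G y = G (\<lambda>i. if i \<in> set qs then y i + 1 else y i)"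
proof (induction qs arbitrary: y)
  case Nil then show ?case by simp
next
  case (Cons q qs)
  have "shl (q # qs) G y = shl qs G (y(q := y q + 1))" by (simp add: shiftE_def)
  also have "\<dots> = G (\<lambda>i. if i \<in> set qs then (y(q := y q + 1)) i + 1 else (y(q := y q + 1)) i)"
    using Cons by simp
  also have "(\<lambda>i. if i \<in> set qs then (y(q := y q + 1)) i + 1 else (y(q := y q + 1)) i)
     = (\<lambda>i. if i \<in> set (q # qs) then y i + 1 else y i)"
    using Cons.prems by (auto simp: fun_eq_iff)
  finally show ?case .
qed

lemma opl_insf1: "opl (map (\<lambda>(p,q). (up r p, up r q)) ps) (\<lambda>x. G (insf r x)) = (\<lambda>x. opl ps G (insf r x))"
proof (induction ps)
  case Nil then show ?case by simp
next
  case (Cons pq ps)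
  obtain p q where pq: "pq = (p,q)" by fastforce
  show ?case by (simp add: pq Cons opPQ_insf)
qed

lemma opl_insf2: "opl (map (\<lambda>q. (r, up r q)) qs) (\<lambda>x. G (insf r x)) = (\<lambda>x. shl qs G (insf r x))"
  by (induction qs) (simp_all add: opPQ_insf_r1)

lemma opl_insf3: "opl (map (\<lambda>p. (p, r)) ps) (\<lambda>x. G (insf r x)) = (\<lambda>x. G (insf r x))"
  by (induction ps) (simp_all add: opPQ_insf_r2)

lemma up_mono: "p < q \<Longrightarrow> up r p < up r q"
  by (auto simp: up_def)

lemma up_inj: "up r p = up r q \<Longrightarrow> p = q"
  unfolding up_def by (cases "p < r"; cases "q < r") auto

lemma mset_insf_pairs:
  assumes r: "1 \<le> r" "r \<le> n"
  shows "mset (map (\<lambda>(p,q). (up r p, up r q)) (pairs (n - 1)) @ map (\<lambda>q. (r, up r q)) [r..<n]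
           @ map (\<lambda>p. (p, r)) [1..<r]) = mset (pairs n)"
proof -
  let ?u = "\<lambda>(p,q). (up r p, up r q)"
  let ?A = "map ?u (pairs (n - 1))"
  let ?B = "map (\<lambda>q. (r, up r q)) [r..<n]"
  let ?C = "map (\<lambda>p. (p, r)) [1..<r]"
  have inju: "inj ?u"
  proof (rule injI)
    fix a b :: "nat \<times> nat" assume "?u a = ?u b"
    then show "a = b" by (cases a; cases b) (auto dest: up_inj)
  qed
  have upr: "\<And>p. up r p \<noteq> r" by (auto simp: up_def)
  have dA: "distinct ?A" by (simp add: distinct_map distinct_pairs inj_on_subset[OF inju subset_UNIV])
  have dB: "distinct ?B" by (simp add: distinct_map inj_on_def up_inj)
  have dC: "distinct ?C" by (simp add: distinct_map inj_on_def)
  have AB: "set ?A \<inter> set ?B = {}"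
  proof -
    have "\<forall>pq\<in>set ?A. fst pq \<noteq> r" using upr by auto
    moreover have "\<forall>pq\<in>set ?B. fst pq = r" by auto
    ultimately show ?thesis by blast
  qed
  have AC: "set ?A \<inter> set ?C = {}"
  proof -
    have "\<forall>pq\<in>set ?A. snd pq \<noteq> r" using upr by auto
    moreover have "\<forall>pq\<in>set ?C. snd pq = r" by auto
    ultimately show ?thesis by blast
  qed
  have BC: "set ?B \<inter> set ?C = {}" by auto
  have d: "distinct (?A @ ?B @ ?C)" using dA dB dC AB AC BC by auto
  have s: "set (?A @ ?B @ ?C) = set (pairs n)"
  proof
    show "set (?A @ ?B @ ?C) \<subseteq> set (pairs n)"
      using r by (auto simp: set_pairs up_def)
  next
    show "set (pairs n) \<subseteq> set (?A @ ?B @ ?C)"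
    proof
      fix pq assume "pq \<in> set (pairs n)"
      then obtain a b where ab: "pq = (a,b)" "1 \<le> a" "a < b" "b \<le> n" by (auto simp: set_pairs)
      define dn where "dn = (\<lambda>x. if x < r then x else x - 1)"
      have updn: "\<And>x. x \<noteq> r \<Longrightarrow> up r (dn x) = x" by (auto simp: up_def dn_def)
      consider "a = r" | "b = r" | "a \<noteq> r" "b \<noteq> r" by blast
      then show "pq \<in> set (?A @ ?B @ ?C)"
      proof cases
        case 1
        have "b - 1 \<in> set [r..<n]" using ab 1 by auto
        moreover have "up r (b - 1) = b" using ab 1 by (auto simp: up_def)
        ultimately have "(a, b) \<in> set ?B" using 1 by force
        then show ?thesis using ab by simp
      next
        case 2
        have "(a, b) \<in> set ?C" using ab 2 by auto
        then show ?thesis using ab by simp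
      next
        case 3
        have "(dn a, dn b) \<in> set (pairs (n - 1))"
          using ab 3 r by (auto simp: set_pairs dn_def)
        moreover have "(a, b) = ?u (dn a, dn b)" using 3 updn by simp
        ultimately have "(a, b) \<in> set ?A" unfolding set_map by (intro image_eqI)
        then show ?thesis using ab by simp
      qed
    qed
  qed
  show ?thesis using s unfolding set_eq_iff_mset_eq_distinct[OF d distinct_pairs[of n]] .
qed

lemma opl_insf:
  assumes r: "1 \<le> r" "r \<le> n"
  shows "opl (pairs n) (\<lambda>x. G (insf r x)) = (\<lambda>x. shl [r..<n] (opl (pairs (n - 1)) G) (insf r x))"
proof -
  have "opl (pairs n) (\<lambda>x. G (insf r x)) =
     opl (map (\<lambda>(p,q). (up r p, up r q)) (pairs (n - 1)) @ map (\<lambda>q. (r, up r q)) [r..<n]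
           @ map (\<lambda>p. (p, r)) [1..<r]) (\<lambda>x. G (insf r x))"
    using opl_mset[OF mset_insf_pairs[OF r]] by simp
  also have "\<dots> = (\<lambda>x. opl (pairs (n - 1)) (shl [r..<n] G) (insf r x))"
    by (simp add: opl_append opl_insf1 opl_insf2 opl_insf3)
  finally show ?thesis by (simp add: opl_shl)
qed




definition bm :: "nat \<Rightarrow> nat \<Rightarrow> (nat \<Rightarrow> real) \<Rightarrow> real mat" where
  "bm n c x = mat n n (\<lambda>(i,j). x (Suc i) gchoose (j + c))"

definition Dd :: "nat \<Rightarrow> (nat \<Rightarrow> real) \<Rightarrow> real" where
  "Dd n x = det (bm n 0 x)"

definition Gd :: "nat \<Rightarrow> (nat \<Rightarrow> real) \<Rightarrow> real" where
  "Gd m x = det (bm m 1 x)"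

lemma Gd_sw:
  assumes "1 \<le> i" "Suc i \<le> m"
  shows "Gd m (sw i x) = - Gd m x"
proof -
  have "bm m 1 (sw i x) = swaprows (i - 1) i (bm m 1 x)"
    using assms by (intro eq_matI) (auto simp: bm_def sw_def)
  moreover have "det (swaprows (i - 1) i (bm m 1 x)) = - det (bm m 1 x)"
    by (rule det_swaprows[of _ m]) (use assms in \<open>auto simp: bm_def\<close>)
  ultimately show ?thesis unfolding Gd_def by simp
qed

lemma Dd_laplace:
  assumes "1 \<le> n"
  shows "Dd n x = (\<Sum>r\<in>{1..n}. (-1) ^ (r - 1) * Gd (n - 1) (insf r x))"
proof -
  have A: "bm n 0 x \<in> carrier_mat n n" by (simp add: bm_def)
  have "Dd n x = (\<Sum>i<n. bm n 0 x $$ (i, 0) * cofactor (bm n 0 x) i 0)"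
    unfolding Dd_def by (rule laplace_expansion_column[OF A]) (use assms in auto)
  also have "\<dots> = (\<Sum>i<n. (-1) ^ i * Gd (n - 1) (insf (Suc i) x))"
  proof (rule sum.cong[OF refl])
    fix i assume i: "i \<in> {..<n}"
    have "mat_delete (bm n 0 x) i 0 = bm (n - 1) 1 (insf (Suc i) x)"
      using i by (intro eq_matI) (auto simp: mat_delete_def bm_def insf_def)
    then show "bm n 0 x $$ (i, 0) * cofactor (bm n 0 x) i 0 = (-1) ^ i * Gd (n - 1) (insf (Suc i) x)"
      using i by (simp add: cofactor_def Gd_def bm_def)
  qed
  also have "\<dots> = (\<Sum>r\<in>{1..n}. (-1) ^ (r - 1) * Gd (n - 1) (insf r x))"
  proof -
    have "{1..n} = Suc ` {..<n}" by (auto simp: image_iff) (metis Suc_pred' lessThan_iff less_Suc_eq_le not_less_eq_eq zero_less_iff_neq_zero)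
    then show ?thesis by (simp add: sum.reindex)
  qed
  finally show ?thesis .
qed


fun diffsn :: "nat \<Rightarrow> ((nat \<Rightarrow> real) \<Rightarrow> real) \<Rightarrow> ((nat \<Rightarrow> real) \<Rightarrow> real)" where
  "diffsn 0 F = F"
| "diffsn (Suc m) F = diffD (Suc m) (diffsn m F)"

lemma mat_rows_eq: "mat n n (\<lambda>(i,j). f i j) = mat\<^sub>r n n (\<lambda>i. vec n (f i))"
  by (rule eq_matI) auto

lemma det_row_lin:
  fixes A B C :: "nat \<Rightarrow> nat \<Rightarrow> real"
  assumes k: "k < n"
    and "\<And>i j. i \<noteq> k \<Longrightarrow> B i j = A i j" "\<And>i j. i \<noteq> k \<Longrightarrow> C i j = A i j"
    and "\<And>j. A k j = B k j + C k j"
  shows "det (mat n n (\<lambda>(i,j). A i j)) = det (mat n n (\<lambda>(i,j). B i j)) + det (mat n n (\<lambda>(i,j). C i j))"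
proof -
  let ?a = "\<lambda>i. vec n (B i)" and ?b = "\<lambda>i. vec n (C i)" and ?c = "\<lambda>i. vec n (A i)"
  have eA: "mat n n (\<lambda>(i,j). A i j) = mat\<^sub>r n n (\<lambda>i. if i = k then ?a i + ?b i else ?c i)"
    using assms by (intro eq_matI) auto
  have eB: "mat n n (\<lambda>(i,j). B i j) = mat\<^sub>r n n (\<lambda>i. if i = k then ?a i else ?c i)"
    using assms by (intro eq_matI) auto
  have eC: "mat n n (\<lambda>(i,j). C i j) = mat\<^sub>r n n (\<lambda>i. if i = k then ?b i else ?c i)"
    using assms by (intro eq_matI) auto
  show ?thesis unfolding eA eB eC
    by (rule det_row_add) (use k in auto)
qed

definition Ms :: "nat \<Rightarrow> nat \<Rightarrow> (nat \<Rightarrow> real) \<Rightarrow> real" where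
  "Ms m s x = det (mat m m (\<lambda>(i,j). x (Suc i) gchoose (j + (if i < s then 0 else 1))))"

lemma diffsn_Ms: "s \<le> m \<Longrightarrow> diffsn s (Gd m) = Ms m s"
proof (induction s)
  case 0
  show ?case by (simp add: Gd_def Ms_def bm_def fun_eq_iff)
next
  case (Suc s)
  have IH: "diffsn s (Gd m) = Ms m s" using Suc by simp
  show ?case
  proof (rule ext)
    fix x :: "nat \<Rightarrow> real"
    let ?x' = "x(Suc s := x (Suc s) + 1)"
    have "Ms m s ?x' = Ms m (Suc s) x + Ms m s x"
      unfolding Ms_def
      by (rule det_row_lin[where k = s]) (use Suc.prems in \<open>auto simp: gbinomial_Suc_Suc\<close>)
    then show "diffsn (Suc s) (Gd m) x = Ms m (Suc s) x"
      by (simp add: IH diffD_def shiftE_def)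
  qed
qed

lemma diffsn_Gd: "diffsn m (Gd m) = Dd m"
proof (rule ext)
  fix x
  have "mat m m (\<lambda>(i,j). x (Suc i) gchoose (j + (if i < m then 0 else 1))) = bm m 0 x"
    by (rule eq_matI) (auto simp: bm_def)
  then show "diffsn m (Gd m) x = Dd m x"
    using diffsn_Ms[of m m] by (simp add: Ms_def Dd_def)
qed




lemma vdm_Suc:
  "vdm (Suc m) x = vdm m x * (\<Prod>i\<in>{1..m}. (x (Suc m) - x i) / (real (Suc m) - real i))"
proof -
  let ?S = "\<lambda>n. {(i, j). 1 \<le> i \<and> i < j \<and> j \<le> (n::nat)}"
  let ?f = "\<lambda>(i, j). (x j - x i) / (real j - real i)"
  have fin: "finite (?S m)"
    by (rule finite_subset[of _ "{1..m} \<times> {1..m}"]) auto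
  have split: "?S (Suc m) = ?S m \<union> (\<lambda>i. (i, Suc m)) ` {1..m}"
    by (auto simp: image_iff)
  have disj: "?S m \<inter> (\<lambda>i. (i, Suc m)) ` {1..m} = {}" by auto
  have "vdm (Suc m) x = prod ?f (?S m) * prod ?f ((\<lambda>i. (i, Suc m)) ` {1..m})"
    unfolding vdm_def split by (rule prod.union_disjoint) (use fin disj in auto)
  also have "prod ?f ((\<lambda>i. (i, Suc m)) ` {1..m}) = (\<Prod>i\<in>{1..m}. (x (Suc m) - x i) / (real (Suc m) - real i))"
    by (subst prod.reindex) (auto simp: inj_on_def)
  finally show ?thesis by (simp add: vdm_def)
qed

lemma prod_real_rev: "(\<Prod>i\<in>{1..m}. (real (Suc m) - real i)) = fact m"
proof -
  have "(\<Prod>i\<in>{1..m}. (real (Suc m) - real i)) = (\<Prod>j\<in>{0..<m}. (real (Suc m) - real (Suc j)))"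
    by (rule prod.reindex_bij_witness[where i = Suc and j = "\<lambda>i. i - 1"]) auto
  also have "\<dots> = (\<Prod>j\<in>{0..<m}. real (m - j))"
    by (rule prod.cong) auto
  also have "\<dots> = fact m" by (simp add: fact_prod_rev)
  finally show ?thesis .
qed

definition Um :: "nat \<Rightarrow> real \<Rightarrow> real mat" where
  "Um N c = mat N N (\<lambda>(i,j). if i = j then (if j = 0 then 1 else real j)
       else if j = Suc i then - (c - real i) else 0)"

lemma det_Um: "det (Um (Suc m) c) = fact m"
proof -
  have ut: "upper_triangular (Um (Suc m) c)"
    by (auto simp: upper_triangular_def Um_def)
  have car: "Um (Suc m) c \<in> carrier_mat (Suc m) (Suc m)" by (simp add: Um_def)
  have "det (Um (Suc m) c) = prod_list (diag_mat (Um (Suc m) c))"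
    by (rule det_upper_triangular[OF ut car])
  also have "\<dots> = (\<Prod>j\<in>{0..<Suc m}. (if j = 0 then 1 else real j))"
    by (simp add: diag_mat_def Um_def prod.distinct_set_conv_list[symmetric] del: upt_Suc)
  also have "\<dots> = (\<Prod>j\<in>{0..<m}. real (Suc j))"
    by (simp add: prod.atLeast0_lessThan_Suc_shift del: prod.op_ivl_Suc)
  also have "\<dots> = fact m" by (simp add: fact_prod_Suc)
  finally show ?thesis .
qed

lemma gbin_step: "real (Suc t) * (a gchoose Suc t) = (a - real t) * (a gchoose t)"
  using gbinomial_absorption[of t a] gbinomial_absorb_comp[of a t] by simp

lemma Dd_Suc:
  "Dd (Suc m) x * fact m = (\<Prod>k<m. (x (Suc m) - x (Suc k))) * Dd m x"
proof -
  let ?N = "Suc m"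
  let ?c = "x (Suc m)"
  let ?A = "bm ?N 0 x"
  let ?U = "Um ?N ?c"
  define Bm where "Bm = mat ?N ?N (\<lambda>(k,j). if j = 0 then 1 else (x (Suc k) - ?c) * (x (Suc k) gchoose (j - 1)))"
  have AU: "?A * ?U = Bm"
  proof (rule eq_matI)
    fix k j assume k: "k < dim_row Bm" and j: "j < dim_col Bm"
    then have k': "k < ?N" and j': "j < ?N" by (auto simp: Bm_def)
    have "(?A * ?U) $$ (k, j) = (\<Sum>l<?N. (x (Suc k) gchoose l) * ?U $$ (l, j))"
      using k' j' by (simp add: bm_def Um_def scalar_prod_def atLeast0LessThan)
    also have "\<dots> = (\<Sum>l<?N. (if l = j then (x (Suc k) gchoose j) * (if j = 0 then 1 else real j) else 0)
                      + (if Suc l = j then (x (Suc k) gchoose l) * (- (?c - real l)) else 0))"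
      by (rule sum.cong[OF refl]) (use j' in \<open>auto simp: Um_def\<close>)
    also have "\<dots> = (x (Suc k) gchoose j) * (if j = 0 then 1 else real j)
                    + (\<Sum>l<?N. (if Suc l = j then (x (Suc k) gchoose l) * (- (?c - real l)) else 0))"
      using j' by (simp add: sum.distrib)
    also have "\<dots> = Bm $$ (k, j)"
    proof (cases j)
      case 0 then show ?thesis using k' by (simp add: Bm_def)
    next
      case (Suc t)
      have "(\<Sum>l<?N. (if Suc l = j then (x (Suc k) gchoose l) * (- (?c - real l)) else 0))
            = (\<Sum>l<?N. (if l = t then (x (Suc k) gchoose t) * (- (?c - real t)) else 0))"
        by (rule sum.cong) (auto simp: Suc)
      also have "\<dots> = (x (Suc k) gchoose t) * (- (?c - real t))"
        using j' Suc by simp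
      finally show ?thesis using k' j' Suc gbin_step[of t "x (Suc k)"]
        by (simp add: Bm_def algebra_simps)
    qed
    finally show "(?A * ?U) $$ (k, j) = Bm $$ (k, j)" .
  qed (auto simp: Bm_def bm_def Um_def)
  have "det (?A * ?U) = det ?A * det ?U" by (rule det_mult) (auto simp: bm_def Um_def)
  then have "Dd ?N x * fact m = det (?A * ?U)"
    by (simp add: Dd_def det_Um)
  also have "\<dots> = det Bm" by (simp add: AU)
  also have "det Bm = (\<Sum>j<?N. Bm $$ (m, j) * cofactor Bm m j)"
    by (rule laplace_expansion_row) (auto simp: Bm_def)
  also have "\<dots> = (\<Sum>j<?N. (if j = 0 then cofactor Bm m 0 else 0))"
    by (rule sum.cong[OF refl]) (auto simp: Bm_def)
  also have "\<dots> = cofactor Bm m 0" by simp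
  also have "\<dots> = (-1) ^ m * det (mat m m (\<lambda>(k,j). (x (Suc k) - ?c) * (x (Suc k) gchoose j)))"
  proof -
    have "mat_delete Bm m 0 = mat m m (\<lambda>(k,j). (x (Suc k) - ?c) * (x (Suc k) gchoose j))"
      by (rule eq_matI) (auto simp: mat_delete_def Bm_def)
    then show ?thesis by (simp add: cofactor_def)
  qed
  also have "det (mat m m (\<lambda>(k,j). (x (Suc k) - ?c) * (x (Suc k) gchoose j)))
      = (\<Prod>k\<in>{0..<m}. (x (Suc k) - ?c)) * Dd m x"
  proof -
    have "mat m m (\<lambda>(k,j). (x (Suc k) - ?c) * (x (Suc k) gchoose j))
        = mat\<^sub>r m m (\<lambda>k. (x (Suc k) - ?c) \<cdot>\<^sub>v vec m (\<lambda>j. x (Suc k) gchoose j))"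
      by (rule eq_matI) auto
    moreover have "bm m 0 x = mat\<^sub>r m m (\<lambda>k. vec m (\<lambda>j. x (Suc k) gchoose j))"
      by (rule eq_matI) (auto simp: bm_def)
    ultimately show ?thesis unfolding Dd_def
      by (simp add: det_rows_mul)
  qed
  also have "(-1) ^ m * ((\<Prod>k\<in>{0..<m}. (x (Suc k) - ?c)) * Dd m x) = (\<Prod>k<m. (?c - x (Suc k))) * Dd m x"
  proof -
    have "(\<Prod>k\<in>{0..<m}. (x (Suc k) - ?c)) = (\<Prod>k<m. (-1) * (?c - x (Suc k)))"
      by (rule prod.cong) (auto simp: atLeast0LessThan)
    also have "\<dots> = (-1) ^ m * (\<Prod>k<m. (?c - x (Suc k)))"
      by (simp only: prod.distrib prod_constant card_lessThan)
    finally show ?thesis by (simp add: power_mult_distrib[symmetric])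
  qed
  finally show ?thesis .
qed

lemma Dd_vdm: "Dd n x = vdm n x"
proof (induction n)
  case 0
  have "Dd 0 x = 1" by (simp add: Dd_def bm_def)
  moreover have "vdm 0 x = 1"
  proof -
    have e: "{(i, j). 1 \<le> i \<and> i < j \<and> j \<le> (0::nat)} = {}" by auto
    show ?thesis unfolding vdm_def e by simp
  qed
  ultimately show ?case by simp
next
  case (Suc m)
  have fm: "(fact m :: real) \<noteq> 0" by simp
  have "(\<Prod>i\<in>{1..m}. (x (Suc m) - x i) / (real (Suc m) - real i))
      = (\<Prod>i\<in>{1..m}. (x (Suc m) - x i)) / fact m"
    by (simp only: prod_dividef prod_real_rev)
  also have "(\<Prod>i\<in>{1..m}. (x (Suc m) - x i)) = (\<Prod>k<m. (x (Suc m) - x (Suc k)))"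
    by (rule prod.reindex_bij_witness[where i = "\<lambda>k. Suc k" and j = "\<lambda>i. i - 1"]) auto
  finally have e: "(\<Prod>i\<in>{1..m}. (x (Suc m) - x i) / (real (Suc m) - real i))
      = (\<Prod>k<m. (x (Suc m) - x (Suc k))) / fact m" .
  have "Dd (Suc m) x = (\<Prod>k<m. (x (Suc m) - x (Suc k))) * Dd m x / fact m"
    using Dd_Suc[of m x] fm by (simp add: field_simps)
  then show ?case using Suc e by (simp add: vdm_Suc)
qed




definition SS :: "nat \<Rightarrow> (nat \<Rightarrow> int) \<Rightarrow> (nat \<Rightarrow> int) set" where
  "SS n k = {l. (\<forall>j. (j < 1 \<or> n \<le> j) \<longrightarrow> l j = 0) \<and>
               (\<forall>j. 1 \<le> j \<and> j < n \<longrightarrow> k j \<le> l j \<and> l j \<le> k (Suc j)) \<and>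
               (\<forall>j. 1 \<le> j \<and> Suc j < n \<longrightarrow> l j < l (Suc j))}"

definition rl :: "(nat \<Rightarrow> int) \<Rightarrow> nat \<Rightarrow> real" where
  "rl l = (\<lambda>i. real_of_int (l i))"

definition ptf :: "nat \<Rightarrow> nat \<Rightarrow> (nat \<Rightarrow> int) \<Rightarrow> nat \<Rightarrow> real" where
  "ptf n r k = (\<lambda>i. if 1 \<le> i \<and> i < r then real_of_int (k i)
                    else if r \<le> i \<and> i < n then real_of_int (k (Suc i)) + 1 else 0)"

definition KPn :: "nat \<Rightarrow> ((nat \<Rightarrow> real) \<Rightarrow> real) \<Rightarrow> bool" where
  "KPn m F \<longleftrightarrow> (\<forall>i x. 1 \<le> i \<longrightarrow> Suc i \<le> m \<longrightarrow> x i = x (Suc i) \<longrightarrow>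
      F x + F (x(i := x i + 1, Suc i := x (Suc i) + 1)) - F (x(Suc i := x (Suc i) + 1)) = 0)"

definition strict :: "(nat \<Rightarrow> int) \<Rightarrow> nat \<Rightarrow> bool" where
  "strict k n \<longleftrightarrow> (\<forall>j. 1 \<le> j \<longrightarrow> Suc j \<le> n \<longrightarrow> k j < k (Suc j))"

lemma rl_upd: "rl (l(p := t)) = (rl l)(p := real_of_int t)"
  by (auto simp: rl_def)

lemma diffsn_upd: "m < p \<Longrightarrow> diffsn m F (x(p := v)) = diffsn m (\<lambda>y. F (y(p := v))) x"
proof (induction m arbitrary: x)
  case 0 then show ?case by simp
next
  case (Suc m)
  have ne: "Suc m \<noteq> p" using Suc.prems by simp
  have "diffsn (Suc m) F (x(p := v)) =
        diffsn m F ((x(Suc m := x (Suc m) + 1))(p := v)) - diffsn m F (x(p := v))"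
    using ne by (simp add: diffD_def shiftE_def fun_upd_twist)
  also have "\<dots> = diffsn m (\<lambda>y. F (y(p := v))) (x(Suc m := x (Suc m) + 1)) - diffsn m (\<lambda>y. F (y(p := v))) x"
  proof -
    have lt: "m < p" using Suc.prems by simp
    show ?thesis by (simp only: Suc.IH[OF lt])
  qed
  also have "\<dots> = diffsn (Suc m) (\<lambda>y. F (y(p := v))) x"
    by (simp add: diffD_def shiftE_def)
  finally show ?case .
qed

lemma diffD_diffsn: "diffD p (diffsn m F) = diffsn m (diffD p F)"
proof (induction m)
  case 0 then show ?case by simp
next
  case (Suc m)
  have "diffD p (diffsn (Suc m) F) = diffD (Suc m) (diffD p (diffsn m F))"
    by (simp add: diffD_comm)
  then show ?case using Suc by simp
qed

lemma diffsn_Suc': "diffsn (Suc m) F = diffsn m (diffD (Suc m) F)"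
  by (simp add: diffD_diffsn)

lemma opl_diffsn: "opl ps (diffsn m F) = diffsn m (opl ps F)"
  by (induction m) (simp_all add: opl_diffD)

lemma KP_D:
  assumes "KPn (Suc m) F"
  shows "KPn m (\<lambda>x. diffD (Suc m) F (x(Suc m := v)))"
  unfolding KPn_def
proof (intro allI impI)
  fix i and x :: "nat \<Rightarrow> real" assume i: "1 \<le> i" "Suc i \<le> m" and xi: "x i = x (Suc i)"
  have K: "\<And>z. z i = z (Suc i) \<Longrightarrow> F z + F (z(i := z i + 1, Suc i := z (Suc i) + 1)) - F (z(Suc i := z (Suc i) + 1)) = 0"
    using assms i unfolding KPn_def by auto
  let ?a = "x(Suc m := v + 1)" and ?b = "x(Suc m := v)"
  have ne1: "i \<noteq> Suc m" "Suc i \<noteq> Suc m" using i by auto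
  have e1: "\<And>w. (x(i := x i + 1, Suc i := x (Suc i) + 1))(Suc m := w) = (x(Suc m := w))(i := x i + 1, Suc i := x (Suc i) + 1)"
    using ne1 by (auto simp: fun_eq_iff)
  have e2: "\<And>w. (x(Suc i := x (Suc i) + 1))(Suc m := w) = (x(Suc m := w))(Suc i := x (Suc i) + 1)"
    using ne1 by (auto simp: fun_eq_iff)
  have Ka: "F ?a + F (?a(i := ?a i + 1, Suc i := ?a (Suc i) + 1)) - F (?a(Suc i := ?a (Suc i) + 1)) = 0"
    by (rule K) (use xi ne1 in simp)
  have Kb: "F ?b + F (?b(i := ?b i + 1, Suc i := ?b (Suc i) + 1)) - F (?b(Suc i := ?b (Suc i) + 1)) = 0"
    by (rule K) (use xi ne1 in simp)
  show "diffD (Suc m) F (x(Suc m := v)) +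
        diffD (Suc m) F ((x(i := x i + 1, Suc i := x (Suc i) + 1))(Suc m := v)) -
        diffD (Suc m) F ((x(Suc i := x (Suc i) + 1))(Suc m := v)) = 0"
    using Ka Kb ne1 by (simp add: diffD_def shiftE_def e1 e2)
qed

lemma KP_D2:
  assumes "KPn (Suc (Suc m)) F"
  shows "KPn m (\<lambda>x. - F (x(Suc m := a, Suc (Suc m) := b)))"
  unfolding KPn_def
proof (intro allI impI)
  fix i and x :: "nat \<Rightarrow> real" assume i: "1 \<le> i" "Suc i \<le> m" and xi: "x i = x (Suc i)"
  have K: "\<And>z. z i = z (Suc i) \<Longrightarrow> F z + F (z(i := z i + 1, Suc i := z (Suc i) + 1)) - F (z(Suc i := z (Suc i) + 1)) = 0"
    using assms i unfolding KPn_def by auto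
  let ?a = "x(Suc m := a, Suc (Suc m) := b)"
  have ne1: "i \<noteq> Suc m" "Suc i \<noteq> Suc m" "i \<noteq> Suc (Suc m)" "Suc i \<noteq> Suc (Suc m)" using i by auto
  have e1: "(x(i := x i + 1, Suc i := x (Suc i) + 1))(Suc m := a, Suc (Suc m) := b) = ?a(i := ?a i + 1, Suc i := ?a (Suc i) + 1)"
    using ne1 by (auto simp: fun_eq_iff)
  have e2: "(x(Suc i := x (Suc i) + 1))(Suc m := a, Suc (Suc m) := b) = ?a(Suc i := ?a (Suc i) + 1)"
    using ne1 by (auto simp: fun_eq_iff)
  have Ka: "F ?a + F (?a(i := ?a i + 1, Suc i := ?a (Suc i) + 1)) - F (?a(Suc i := ?a (Suc i) + 1)) = 0"
    by (rule K) (use xi ne1 in simp)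
  show "- F (x(Suc m := a, Suc (Suc m) := b)) +
        - F ((x(i := x i + 1, Suc i := x (Suc i) + 1))(Suc m := a, Suc (Suc m) := b)) -
        - F ((x(Suc i := x (Suc i) + 1))(Suc m := a, Suc (Suc m) := b)) = 0"
    unfolding e1 e2 using Ka by simp
qed

lemma KP_DD:
  assumes "KPn (Suc (Suc m)) F" and z: "z (Suc m) = z (Suc (Suc m))"
  shows "diffD (Suc m) (diffD (Suc (Suc m)) F) z = - F (z(Suc m := z (Suc m) + 1))"
proof -
  have K: "F z + F (z(Suc m := z (Suc m) + 1, Suc (Suc m) := z (Suc (Suc m)) + 1)) - F (z(Suc (Suc m) := z (Suc (Suc m)) + 1)) = 0"
    using assms unfolding KPn_def by auto
  have e: "(z(Suc (Suc m) := z (Suc (Suc m)) + 1))(Suc m := z (Suc m) + 1) = z(Suc m := z (Suc m) + 1, Suc (Suc m) := z (Suc (Suc m)) + 1)"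
    by (auto simp: fun_eq_iff)
  show ?thesis using K by (simp add: diffD_def shiftE_def e)
qed

lemma tele_int:
  fixes g :: "int \<Rightarrow> real"
  assumes "a \<le> b + 1"
  shows "(\<Sum>t\<in>{a..b}. g (t + 1) - g t) = g (b + 1) - g a"
proof -
  obtain d :: nat where d: "b + 1 = a + int d" using assms by (metis le_add_diff_inverse zle_iff_zadd)
  have "\<And>b. b + 1 = a + int d \<Longrightarrow> (\<Sum>t\<in>{a..b}. g (t + 1) - g t) = g (b + 1) - g a"
  proof (induction d)
    case 0 then have "{a..b} = {}" by auto
    then show ?case using 0 by simp
  next
    case (Suc d)
    have "{a..b} = insert b {a..b - 1}" using Suc.prems by auto
    moreover have "b \<notin> {a..b - 1}" by auto
    ultimately have "(\<Sum>t\<in>{a..b}. g (t + 1) - g t) = (g (b + 1) - g b) + (\<Sum>t\<in>{a..b - 1}. g (t + 1) - g t)"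
      by simp
    also have "(\<Sum>t\<in>{a..b - 1}. g (t + 1) - g t) = g (b - 1 + 1) - g a"
      by (rule Suc.IH) (use Suc.prems in simp)
    finally show ?case by simp
  qed
  then show ?thesis using d by blast
qed

lemma finite_SS: "finite (SS n k)"
proof -
  let ?P = "PiE {1..<n} (\<lambda>j. {k j..k (Suc j)})"
  let ?e = "\<lambda>f. (\<lambda>j. if j \<in> {1..<n} then f j else 0::int)"
  have "SS n k \<subseteq> ?e ` ?P"
  proof
    fix l assume l: "l \<in> SS n k"
    have z: "\<And>j. j < 1 \<or> n \<le> j \<Longrightarrow> l j = 0" using l unfolding SS_def by blast
    have "l = ?e (restrict l {1..<n})"
    proof (rule ext)
      fix j show "l j = ?e (restrict l {1..<n}) j" using z[of j] by auto
    qed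
    moreover have "restrict l {1..<n} \<in> ?P" using l by (auto simp: SS_def)
    ultimately show "l \<in> ?e ` ?P" by blast
  qed
  moreover have "finite (?e ` ?P)" by (intro finite_imageI finite_PiE) auto
  ultimately show ?thesis by (rule finite_subset)
qed


lemma SS_Suc:
  assumes n: "1 \<le> n"
  shows "l \<in> SS (Suc n) k \<longleftrightarrow> l(n := 0) \<in> SS n k \<and> k n \<le> l n \<and> l n \<le> k (Suc n) \<and> (2 \<le> n \<longrightarrow> l (n - 1) < l n)"
proof
  assume l: "l \<in> SS (Suc n) k"
  have z: "\<And>j. j < 1 \<or> Suc n \<le> j \<Longrightarrow> l j = 0"
    and it: "\<And>j. 1 \<le> j \<Longrightarrow> j < Suc n \<Longrightarrow> k j \<le> l j \<and> l j \<le> k (Suc j)"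
    and inc: "\<And>j. 1 \<le> j \<Longrightarrow> Suc j < Suc n \<Longrightarrow> l j < l (Suc j)"
    using l unfolding SS_def by auto
  have "l(n := 0) \<in> SS n k"
    unfolding SS_def using z it inc by (auto simp: not_less_eq_eq)
  moreover have "k n \<le> l n \<and> l n \<le> k (Suc n)" using it[of n] n by simp
  moreover have "2 \<le> n \<longrightarrow> l (n - 1) < l n" using inc[of "n - 1"] by simp
  ultimately show "l(n := 0) \<in> SS n k \<and> k n \<le> l n \<and> l n \<le> k (Suc n) \<and> (2 \<le> n \<longrightarrow> l (n - 1) < l n)"
    by simp
next
  assume a: "l(n := 0) \<in> SS n k \<and> k n \<le> l n \<and> l n \<le> k (Suc n) \<and> (2 \<le> n \<longrightarrow> l (n - 1) < l n)"
  have z: "\<And>j. j < 1 \<or> n \<le> j \<Longrightarrow> (l(n := 0)) j = 0"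
    and it: "\<And>j. 1 \<le> j \<Longrightarrow> j < n \<Longrightarrow> k j \<le> (l(n := 0)) j \<and> (l(n := 0)) j \<le> k (Suc j)"
    and inc: "\<And>j. 1 \<le> j \<Longrightarrow> Suc j < n \<Longrightarrow> (l(n := 0)) j < (l(n := 0)) (Suc j)"
    using a unfolding SS_def by auto
  have A1: "\<forall>j. (j < 1 \<or> Suc n \<le> j) \<longrightarrow> l j = 0"
  proof (intro allI impI)
    fix j assume "j < 1 \<or> Suc n \<le> j"
    then show "l j = 0" using z[of j] n by (auto split: if_splits)
  qed
  have A2: "\<forall>j. 1 \<le> j \<and> j < Suc n \<longrightarrow> k j \<le> l j \<and> l j \<le> k (Suc j)"
  proof (intro allI impI)
    fix j assume j: "1 \<le> j \<and> j < Suc n"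
    show "k j \<le> l j \<and> l j \<le> k (Suc j)"
    proof (cases "j = n")
      case True then show ?thesis using a by simp
    next
      case False then show ?thesis using it[of j] j by simp
    qed
  qed
  have A3: "\<forall>j. 1 \<le> j \<and> Suc j < Suc n \<longrightarrow> l j < l (Suc j)"
  proof (intro allI impI)
    fix j assume j: "1 \<le> j \<and> Suc j < Suc n"
    show "l j < l (Suc j)"
    proof (cases "Suc j = n")
      case True
      then have "2 \<le> n" using j by simp
      then show ?thesis using a True by (metis diff_Suc_1)
    next
      case False then show ?thesis using inc[of j] j by simp
    qed
  qed
  show "l \<in> SS (Suc n) k" unfolding SS_def using A1 A2 A3 by blast
qed

lemma SS_zero: "l \<in> SS n k \<Longrightarrow> n \<le> j \<Longrightarrow> l j = 0"
  unfolding SS_def by auto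

lemma SS_step_sum:
  fixes A :: "(nat \<Rightarrow> int) \<Rightarrow> real"
  assumes st: "strict k (Suc (Suc (Suc m)))"
  shows "(\<Sum>l\<in>SS (Suc (Suc (Suc m))) k. A l) =
     (\<Sum>t\<in>{k (Suc (Suc m))..k (Suc (Suc (Suc m)))}. \<Sum>l\<in>SS (Suc (Suc m)) k. A (l(Suc (Suc m) := t)))
     - (\<Sum>l\<in>SS (Suc m) k. A (l(Suc m := k (Suc (Suc m)), Suc (Suc m) := k (Suc (Suc m)))))"
proof -
  define p1 where "p1 = Suc m"
  define p2 where "p2 = Suc (Suc m)"
  define N where "N = Suc (Suc (Suc m))"
  define c where "c = k p2"
  have p: "p2 = Suc p1" "N = Suc p2" "1 \<le> p1" by (simp_all add: p1_def p2_def N_def)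
  have kk: "k p1 < k p2" "k p2 < k N"
    using st unfolding strict_def p1_def p2_def N_def by auto
  define W where "W = {l. l(p2 := 0) \<in> SS p2 k \<and> k p2 \<le> l p2 \<and> l p2 \<le> k N}"
  define T where "T = {k p2..k N} \<times> SS p2 k"
  have SSW: "SS N k \<subseteq> W"
  proof
    fix l assume "l \<in> SS N k"
    then show "l \<in> W" unfolding W_def using SS_Suc[of p2 l k] p by simp
  qed
  have WT: "(\<Sum>l\<in>W. A l) = (\<Sum>(t, l)\<in>T. A (l(p2 := t)))"
  proof (rule sum.reindex_bij_witness[where i = "\<lambda>(t, l). l(p2 := t)" and j = "\<lambda>l. (l p2, l(p2 := 0))"])
    fix a assume "a \<in> W"
    show "(case (a p2, a(p2 := 0)) of (t, l) \<Rightarrow> l(p2 := t)) = a" by simp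
  next
    fix a assume "a \<in> W"
    then show "(a p2, a(p2 := 0)) \<in> T" unfolding W_def T_def by simp
  next
    fix b assume b: "b \<in> T"
    obtain t l where tl: "b = (t, l)" by fastforce
    have "l p2 = 0" using b tl SS_zero[of l p2 k p2] unfolding T_def by simp
    then show "(\<lambda>l. (l p2, l(p2 := 0))) ((\<lambda>(t, l). l(p2 := t)) b) = b"
      using tl by (simp add: fun_eq_iff)
  next
    fix b assume b: "b \<in> T"
    obtain t l where tl: "b = (t, l)" by fastforce
    have "l p2 = 0" using b tl SS_zero[of l p2 k p2] unfolding T_def by simp
    then have "(l(p2 := t))(p2 := 0) = l" by (simp add: fun_eq_iff)
    then show "(case b of (t, l) \<Rightarrow> l(p2 := t)) \<in> W" using b tl unfolding W_def T_def by simp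
  next
    fix a assume "a \<in> W"
    show "(case (a p2, a(p2 := 0)) of (t, l) \<Rightarrow> A (l(p2 := t))) = A a" by simp
  qed
  have finT: "finite T" unfolding T_def by (simp add: finite_SS)
  have finW: "finite W"
  proof (rule finite_subset[OF _ finite_imageI[OF finT, of "\<lambda>(t, l). l(p2 := t)"]])
    show "W \<subseteq> (\<lambda>(t, l). l(p2 := t)) ` T"
    proof
      fix a assume a: "a \<in> W"
      have "a = (\<lambda>(t, l). l(p2 := t)) (a p2, a(p2 := 0))" by simp
      moreover have "(a p2, a(p2 := 0)) \<in> T" using a unfolding W_def T_def by simp
      ultimately show "a \<in> (\<lambda>(t, l). l(p2 := t)) ` T" by blast
    qed
  qed
  have bad: "a p1 = c \<and> a p2 = c \<and> a(p1 := 0, p2 := 0) \<in> SS p1 k" if a: "a \<in> W - SS N k" for a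
  proof -
    have aW: "a(p2 := 0) \<in> SS (Suc p1) k" "k p2 \<le> a p2" "a p2 \<le> k N"
      using a p unfolding W_def by auto
    have ne: "p1 \<noteq> p2" using p by simp
    have s1: "(a(p2 := 0))(p1 := 0) \<in> SS p1 k" and s2: "k p1 \<le> a p1" "a p1 \<le> k p2"
      using SS_Suc[of p1 "a(p2 := 0)" k] aW(1) p ne by auto
    have "\<not> (2 \<le> p2 \<longrightarrow> a (p2 - 1) < a p2)"
      using a SS_Suc[of p2 a k] aW p unfolding N_def by (auto simp: W_def)
    then have "\<not> a p1 < a p2" using p by simp
    then have "a p1 = c \<and> a p2 = c" using s2 aW unfolding c_def by simp
    moreover have "a(p1 := 0, p2 := 0) = (a(p2 := 0))(p1 := 0)" using ne by (simp add: fun_upd_twist)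
    ultimately show ?thesis using s1 by simp
  qed
  have good: "b(p1 := c, p2 := c) \<in> W - SS N k" if b: "b \<in> SS p1 k" for b
  proof -
    have b0: "b p1 = 0" "b p2 = 0" using SS_zero[OF b] p by auto
    have ne: "p1 \<noteq> p2" using p by simp
    have lt: "b (p1 - 1) < c" if "2 \<le> p1"
    proof -
      have it: "\<And>j. 1 \<le> j \<Longrightarrow> j < p1 \<Longrightarrow> k j \<le> b j \<and> b j \<le> k (Suc j)"
        using b unfolding SS_def by auto
      have "b (p1 - 1) \<le> k (Suc (p1 - 1))" using it[of "p1 - 1"] that by simp
      then show ?thesis using kk that unfolding c_def by simp
    qed
    have "(b(p1 := c))(p1 := 0) = b" using b0 by (simp add: fun_eq_iff)
    then have b': "b(p1 := c) \<in> SS (Suc p1) k"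
      using SS_Suc[of p1 "b(p1 := c)" k] p b lt kk unfolding c_def by auto
    have e: "(b(p1 := c, p2 := c))(p2 := 0) = b(p1 := c)" using b0 ne by (simp add: fun_eq_iff)
    have inW: "b(p1 := c, p2 := c) \<in> W"
      unfolding W_def using b' e p kk unfolding c_def by simp
    have "b(p1 := c, p2 := c) \<notin> SS N k"
      using SS_Suc[of p2 "b(p1 := c, p2 := c)" k] p ne unfolding N_def by auto
    then show ?thesis using inW by simp
  qed
  have WB: "(\<Sum>l\<in>W - SS N k. A l) = (\<Sum>l\<in>SS p1 k. A (l(p1 := c, p2 := c)))"
  proof (rule sum.reindex_bij_witness[where i = "\<lambda>l. l(p1 := c, p2 := c)" and j = "\<lambda>l. l(p1 := 0, p2 := 0)"])
    fix a assume "a \<in> W - SS N k"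
    then have "a p1 = c" "a p2 = c" using bad by auto
    then show "(\<lambda>l. l(p1 := c, p2 := c)) ((\<lambda>l. l(p1 := 0, p2 := 0)) a) = a"
      by (auto simp: fun_eq_iff)
  next
    fix a assume "a \<in> W - SS N k"
    then show "(\<lambda>l. l(p1 := 0, p2 := 0)) a \<in> SS p1 k" using bad by simp
  next
    fix b assume b: "b \<in> SS p1 k"
    have b0: "b p1 = 0" "b p2 = 0" using SS_zero[OF b] p by auto
    then show "(\<lambda>l. l(p1 := 0, p2 := 0)) ((\<lambda>l. l(p1 := c, p2 := c)) b) = b"
      by (simp add: fun_eq_iff)
  next
    fix b assume "b \<in> SS p1 k"
    then show "(\<lambda>l. l(p1 := c, p2 := c)) b \<in> W - SS N k" using good by simp
  next
    fix a assume "a \<in> W - SS N k"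
    then have "a p1 = c" "a p2 = c" using bad by auto
    then have "(\<lambda>l. l(p1 := c, p2 := c)) ((\<lambda>l. l(p1 := 0, p2 := 0)) a) = a"
      by (auto simp: fun_eq_iff)
    then show "A ((\<lambda>l. l(p1 := c, p2 := c)) ((\<lambda>l. l(p1 := 0, p2 := 0)) a)) = A a" by simp
  qed
  have "(\<Sum>l\<in>SS N k. A l) = (\<Sum>l\<in>W. A l) - (\<Sum>l\<in>W - SS N k. A l)"
    using sum.subset_diff[OF SSW finW, of A] by simp
  also have "(\<Sum>l\<in>W. A l) = (\<Sum>t\<in>{k p2..k N}. \<Sum>l\<in>SS p2 k. A (l(p2 := t)))"
    unfolding WT T_def by (simp add: sum.cartesian_product)
  finally show ?thesis unfolding WB by (simp add: p1_def p2_def N_def c_def)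
qed


lemma SS_1: "SS (Suc 0) k = {\<lambda>_. 0}"
proof
  show "SS (Suc 0) k \<subseteq> {\<lambda>_. 0}"
  proof
    fix l assume l: "l \<in> SS (Suc 0) k"
    have "l j = 0" for j using l unfolding SS_def by (cases "j < 1") auto
    then show "l \<in> {\<lambda>_. 0}" by (auto simp: fun_eq_iff)
  qed
next
  show "{\<lambda>_. 0} \<subseteq> SS (Suc 0) k" unfolding SS_def by auto
qed

lemma SS_2_sum:
  fixes A :: "(nat \<Rightarrow> int) \<Rightarrow> real"
  shows "(\<Sum>l\<in>SS (Suc (Suc 0)) k. A l) = (\<Sum>t\<in>{k 1..k 2}. A ((\<lambda>_. 0)(1 := t)))"
proof (rule sum.reindex_bij_witness[where i = "\<lambda>t. (\<lambda>_. 0)(1 := t)" and j = "\<lambda>l. l 1"])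
  fix a assume a: "a \<in> SS (Suc (Suc 0)) k"
  then have "a(1 := 0) = (\<lambda>_. 0)" using SS_Suc[of 1 a k] SS_1 by auto
  then show "(\<lambda>t. (\<lambda>_. 0)(1 := t)) ((\<lambda>l. l 1) a) = a" by (auto simp: fun_eq_iff split: if_splits)
next
  fix a assume a: "a \<in> SS (Suc (Suc 0)) k"
  then show "(\<lambda>l. l 1) a \<in> {k 1..k 2}" using SS_Suc[of 1 a k] by (simp add: numeral_2_eq_2)
next
  fix b show "(\<lambda>l. l 1) ((\<lambda>t. (\<lambda>_. 0)(1 := t)) b) = b" by simp
next
  fix b assume b: "b \<in> {k 1..k 2}"
  have "((\<lambda>_. 0)(1 := b))(1 := 0) \<in> SS (Suc 0) k" using SS_1 by (simp add: fun_eq_iff)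
  then show "(\<lambda>t. (\<lambda>_. 0)(1 := t)) b \<in> SS (Suc (Suc 0)) k" using SS_Suc[of 1 "(\<lambda>_. 0)(1 := b)" k] b by (simp add: numeral_2_eq_2)
next
  fix a assume a: "a \<in> SS (Suc (Suc 0)) k"
  then have "a(1 := 0) = (\<lambda>_. 0)" using SS_Suc[of 1 a k] SS_1 by auto
  then have "(\<lambda>_. 0)(1 := a 1) = a" by (auto simp: fun_eq_iff split: if_splits)
  then show "A ((\<lambda>t. (\<lambda>_. 0)(1 := t)) ((\<lambda>l. l 1) a)) = A a" by simp
qed

lemma ptf_I1: "1 \<le> r \<Longrightarrow> r \<le> Suc (Suc m) \<Longrightarrow>
  (ptf (Suc (Suc m)) r k)(Suc (Suc m) := real_of_int (k (Suc (Suc (Suc m)))) + 1) = ptf (Suc (Suc (Suc m))) r k"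
  by (auto simp: ptf_def fun_eq_iff)

lemma ptf_I2: "(ptf (Suc (Suc m)) (Suc (Suc m)) k)(Suc (Suc m) := real_of_int (k (Suc (Suc m))))
   = ptf (Suc (Suc (Suc m))) (Suc (Suc (Suc m))) k"
  by (auto simp: ptf_def fun_eq_iff)

lemma ptf_I3: "1 \<le> r \<Longrightarrow> r \<le> Suc m \<Longrightarrow>
  (ptf (Suc (Suc m)) r k)(Suc (Suc m) := real_of_int (k (Suc (Suc m))))
   = (ptf (Suc m) r k)(Suc m := real_of_int (k (Suc (Suc m))) + 1, Suc (Suc m) := real_of_int (k (Suc (Suc m))))"
  by (auto simp: ptf_def fun_eq_iff)

lemma ptf_1: "ptf (Suc 0) (Suc 0) k = (\<lambda>_. 0)"
  by (auto simp: ptf_def fun_eq_iff)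

lemma ptf_2: "ptf (Suc (Suc 0)) (Suc 0) k = (\<lambda>_. 0)(Suc 0 := real_of_int (k (Suc (Suc 0))) + 1)"
  "ptf (Suc (Suc 0)) (Suc (Suc 0)) k = (\<lambda>_. 0)(Suc 0 := real_of_int (k (Suc 0)))"
  by (auto simp: ptf_def fun_eq_iff numeral_2_eq_2)

lemma rl_zero: "rl (\<lambda>_. 0) = (\<lambda>_. 0)"
  by (simp add: rl_def)

lemma strict_mono_le: "strict k n \<Longrightarrow> m \<le> n \<Longrightarrow> strict k m"
  unfolding strict_def by auto




lemma main_sum:
  assumes "1 \<le> n" "strict k n" "KPn (n - 1) F"
  shows "(\<Sum>l\<in>SS n k. diffsn (n - 1) F (rl l)) = (\<Sum>r\<in>{1..n}. (-1) ^ (r - 1) * F (ptf n r k))"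
  using assms
proof (induction n arbitrary: F rule: less_induct)
  case (less n)
  consider "n = Suc 0" | "n = Suc (Suc 0)" | m where "n = Suc (Suc (Suc m))"
    using less.prems(1) by (metis One_nat_def Suc_le_D Suc_le_lessD le_SucE less_Suc_eq_0_disj not0_implies_Suc)
  then show ?case
  proof cases
    case 1
    then show ?thesis by (simp add: SS_1 rl_zero ptf_1)
  next
    case 2
    have k12: "k 1 \<le> k 2 + 1" using less.prems(2) 2 unfolding strict_def
      by (metis One_nat_def Suc_1 add_increasing2 dual_order.refl le_numeral_extra(1) less_imp_le one_le_numeral zero_less_one_class.zero_le_one)
    let ?g = "\<lambda>t. F ((\<lambda>_. 0)(1 := real_of_int t))"
    have "(\<Sum>l\<in>SS n k. diffsn (n - 1) F (rl l)) = (\<Sum>t\<in>{k 1..k 2}. diffD 1 F (rl ((\<lambda>_. 0)(1 := t))))"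
      using 2 by (simp add: SS_2_sum)
    also have "\<dots> = (\<Sum>t\<in>{k 1..k 2}. ?g (t + 1) - ?g t)"
    proof (rule sum.cong[OF refl])
      fix t :: int
      have e1: "rl ((\<lambda>_. 0)(1 := t)) = (\<lambda>_. 0)(1 := real_of_int t)" by (auto simp: rl_def)
      have e2: "((\<lambda>_. 0::real)(1 := real_of_int t))(1 := ((\<lambda>_. 0)(1 := real_of_int t)) 1 + 1)
               = (\<lambda>_. 0)(1 := real_of_int (t + 1))" by simp
      show "diffD 1 F (rl ((\<lambda>_. 0)(1 := t))) = ?g (t + 1) - ?g t"
        unfolding e1 diffD_def shiftE_def e2 by simp
    qed
    also have "\<dots> = ?g (k 2 + 1) - ?g (k 1)" by (rule tele_int[OF k12])
    also have "\<dots> = (\<Sum>r\<in>{1..n}. (-1) ^ (r - 1) * F (ptf n r k))"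
      using 2 by (simp add: ptf_2 numeral_2_eq_2)
    finally show ?thesis .
  next
    case (3 m)
    define p1 where "p1 = Suc m"
    define p2 where "p2 = Suc (Suc m)"
    define N where "N = Suc (Suc (Suc m))"
    define c where "c = real_of_int (k p2)"
    have nN: "n = N" using 3 by (simp add: N_def)
    have st: "strict k N" using less.prems nN by simp
    have KP: "KPn (Suc (Suc m)) F" using less.prems nN by (simp add: N_def)
    let ?A = "\<lambda>l. diffsn (Suc (Suc m)) F (rl l)"
    define Ft where "Ft = (\<lambda>t::int. \<lambda>y. diffD p2 F (y(p2 := real_of_int t)))"
    define F2 where "F2 = (\<lambda>y. - F (y(p1 := c + 1, p2 := c)))"
    have A1: "?A (l(p2 := t)) = diffsn (Suc m) (Ft t) (rl l)" for l t
    proof -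
      have "?A (l(p2 := t)) = diffsn (Suc m) (diffD p2 F) ((rl l)(p2 := real_of_int t))"
        by (simp only: rl_upd diffsn_Suc'[of "Suc m" F] p2_def)
      also have "\<dots> = diffsn (Suc m) (Ft t) (rl l)"
        unfolding Ft_def by (rule diffsn_upd) (simp add: p2_def)
      finally show ?thesis .
    qed
    have A2: "?A (l(p1 := k p2, p2 := k p2)) = diffsn m F2 (rl l)" for l
    proof -
      let ?H = "diffD p1 (diffD p2 F)"
      have "?A (l(p1 := k p2, p2 := k p2)) = diffsn m ?H ((rl l)(p1 := c, p2 := c))"
        by (simp only: rl_upd diffsn_Suc'[of "Suc m" F] diffsn_Suc'[of m "diffD (Suc (Suc m)) F"] p1_def p2_def c_def of_int_of_nat_eq)
      also have "\<dots> = diffsn m (\<lambda>y. ?H (y(p2 := c))) ((rl l)(p1 := c))"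
        by (rule diffsn_upd) (simp add: p2_def)
      also have "\<dots> = diffsn m (\<lambda>y. ?H (y(p1 := c, p2 := c))) (rl l)"
        by (rule diffsn_upd) (simp add: p1_def)
      also have "(\<lambda>y. ?H (y(p1 := c, p2 := c))) = F2"
      proof (rule ext)
        fix y :: "nat \<Rightarrow> real"
        let ?z = "y(p1 := c, p2 := c)"
        have "?z (Suc m) = ?z (Suc (Suc m))" by (simp add: p1_def p2_def)
        then have "?H ?z = - F (?z(Suc m := ?z (Suc m) + 1))"
          unfolding p1_def p2_def by (rule KP_DD[OF KP])
        also have "?z(Suc m := ?z (Suc m) + 1) = y(p1 := c + 1, p2 := c)"
          by (auto simp: fun_eq_iff p1_def p2_def)
        finally have "?H ?z = - F (y(p1 := c + 1, p2 := c))" .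
        then show "?H ?z = F2 y" by (simp only: F2_def)
      qed
      finally show ?thesis .
    qed
    have IH1: "(\<Sum>l\<in>SS p2 k. diffsn (Suc m) (Ft t) (rl l)) = (\<Sum>r\<in>{1..p2}. (-1) ^ (r - 1) * Ft t (ptf p2 r k))" for t
    proof -
      have "KPn (Suc m) (Ft t)" unfolding Ft_def p2_def by (rule KP_D[OF KP])
      moreover have "strict k p2" using strict_mono_le[OF st] by (simp add: p2_def N_def)
      ultimately show ?thesis using less.IH[of p2 "Ft t"] nN by (simp add: p2_def N_def)
    qed
    have IH2: "(\<Sum>l\<in>SS p1 k. diffsn m F2 (rl l)) = (\<Sum>r\<in>{1..p1}. (-1) ^ (r - 1) * F2 (ptf p1 r k))"
    proof -
      have "KPn m F2" unfolding F2_def p1_def p2_def by (rule KP_D2[OF KP])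
      moreover have "strict k p1" using strict_mono_le[OF st] by (simp add: p1_def N_def)
      ultimately show ?thesis using less.IH[of p1 F2] nN by (simp add: p1_def N_def)
    qed
    have tele: "(\<Sum>t\<in>{k p2..k N}. Ft t P) = F (P(p2 := real_of_int (k N) + 1)) - F (P(p2 := c))" for P
    proof -
      let ?g = "\<lambda>t. F (P(p2 := real_of_int t))"
      have kk: "k p2 \<le> k N + 1" using st unfolding strict_def p2_def N_def by fastforce
      have "(\<Sum>t\<in>{k p2..k N}. Ft t P) = (\<Sum>t\<in>{k p2..k N}. ?g (t + 1) - ?g t)"
        by (rule sum.cong[OF refl]) (simp add: Ft_def diffD_def shiftE_def)
      also have "\<dots> = ?g (k N + 1) - ?g (k p2)" by (rule tele_int[OF kk])
      finally show ?thesis by (simp add: c_def)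
    qed
    have "(\<Sum>l\<in>SS n k. diffsn (n - 1) F (rl l)) = (\<Sum>l\<in>SS N k. ?A l)" by (simp add: nN N_def)
    also have "\<dots> = (\<Sum>t\<in>{k p2..k N}. \<Sum>l\<in>SS p2 k. ?A (l(p2 := t)))
                    - (\<Sum>l\<in>SS p1 k. ?A (l(p1 := k p2, p2 := k p2)))"
      using SS_step_sum[OF st[unfolded N_def], of ?A] by (simp add: p1_def p2_def N_def)
    also have "\<dots> = (\<Sum>t\<in>{k p2..k N}. \<Sum>r\<in>{1..p2}. (-1) ^ (r - 1) * Ft t (ptf p2 r k))
                    - (\<Sum>r\<in>{1..p1}. (-1) ^ (r - 1) * F2 (ptf p1 r k))"
    proof -
      have "(\<Sum>l\<in>SS p1 k. ?A (l(p1 := k p2, p2 := k p2))) = (\<Sum>l\<in>SS p1 k. diffsn m F2 (rl l))"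
        by (rule sum.cong[OF refl]) (rule A2)
      moreover have "(\<Sum>l\<in>SS p2 k. ?A (l(p2 := t))) = (\<Sum>l\<in>SS p2 k. diffsn (Suc m) (Ft t) (rl l))" for t
        by (rule sum.cong[OF refl]) (rule A1)
      ultimately show ?thesis by (simp only: IH1 IH2)
    qed
    also have "(\<Sum>t\<in>{k p2..k N}. \<Sum>r\<in>{1..p2}. (-1) ^ (r - 1) * Ft t (ptf p2 r k))
        = (\<Sum>r\<in>{1..p2}. (-1) ^ (r - 1) * (F (ptf N r k) - F ((ptf p2 r k)(p2 := c))))"
    proof -
      have "(\<Sum>t\<in>{k p2..k N}. \<Sum>r\<in>{1..p2}. (-1) ^ (r - 1) * Ft t (ptf p2 r k))
          = (\<Sum>r\<in>{1..p2}. (-1) ^ (r - 1) * (\<Sum>t\<in>{k p2..k N}. Ft t (ptf p2 r k)))"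
        by (simp add: sum.swap[of _ "{k p2..k N}"] sum_distrib_left)
      also have "\<dots> = (\<Sum>r\<in>{1..p2}. (-1) ^ (r - 1) * (F (ptf N r k) - F ((ptf p2 r k)(p2 := c))))"
      proof (rule sum.cong[OF refl])
        fix r assume r: "r \<in> {1..p2}"
        have "(ptf p2 r k)(p2 := real_of_int (k N) + 1) = ptf N r k"
          using r ptf_I1[of r m k] by (simp add: p2_def N_def)
        then show "(-1) ^ (r - 1) * (\<Sum>t\<in>{k p2..k N}. Ft t (ptf p2 r k)) =
                   (-1) ^ (r - 1) * (F (ptf N r k) - F ((ptf p2 r k)(p2 := c)))"
          by (simp add: tele)
      qed
      finally show ?thesis .
    qed
    also have "(\<Sum>r\<in>{1..p1}. (-1) ^ (r - 1) * F2 (ptf p1 r k))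
        = - (\<Sum>r\<in>{1..p1}. (-1) ^ (r - 1) * F ((ptf p2 r k)(p2 := c)))"
    proof -
      have "(\<Sum>r\<in>{1..p1}. (-1) ^ (r - 1) * F2 (ptf p1 r k))
          = (\<Sum>r\<in>{1..p1}. - ((-1) ^ (r - 1) * F ((ptf p2 r k)(p2 := c))))"
      proof (rule sum.cong[OF refl])
        fix r assume r: "r \<in> {1..p1}"
        have "(ptf p2 r k)(p2 := c) = (ptf p1 r k)(p1 := c + 1, p2 := c)"
          using r ptf_I3[of r m k] by (simp add: p1_def p2_def c_def)
        then show "(-1) ^ (r - 1) * F2 (ptf p1 r k) = - ((-1) ^ (r - 1) * F ((ptf p2 r k)(p2 := c)))"
          by (simp add: F2_def)
      qed
      then show ?thesis by (simp add: sum_negf)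
    qed
    finally have L: "(\<Sum>l\<in>SS n k. diffsn (n - 1) F (rl l)) =
        (\<Sum>r\<in>{1..p2}. (-1) ^ (r - 1) * (F (ptf N r k) - F ((ptf p2 r k)(p2 := c))))
        - - (\<Sum>r\<in>{1..p1}. (-1) ^ (r - 1) * F ((ptf p2 r k)(p2 := c)))" .
    have s1: "{1..p2} = insert p2 {1..p1}" "p2 \<notin> {1..p1}" by (auto simp: p1_def p2_def)
    have s2: "{1..N} = insert N {1..p2}" "N \<notin> {1..p2}" by (auto simp: N_def p2_def)
    have last: "(ptf p2 p2 k)(p2 := c) = ptf N N k"
      using ptf_I2[of m k] by (simp add: p2_def N_def c_def)
    have pw: "(-1::real) ^ (N - Suc 0) = - ((-1) ^ (p2 - Suc 0))" by (simp add: N_def p2_def)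
    define a where "a = (\<lambda>r. (-1::real) ^ (r - 1) * F (ptf N r k))"
    define b where "b = (\<lambda>r. (-1::real) ^ (r - 1) * F ((ptf p2 r k)(p2 := c)))"
    have L': "(\<Sum>l\<in>SS n k. diffsn (n - 1) F (rl l)) = (\<Sum>r\<in>{1..p2}. a r - b r) - - (\<Sum>r\<in>{1..p1}. b r)"
      using L by (simp only: a_def b_def right_diff_distrib)
    also have "\<dots> = (\<Sum>r\<in>{1..p2}. a r) - b p2"
      unfolding sum_subtractf s1(1) sum.insert[OF finite_atLeastAtMost s1(2)] by simp
    also have "b p2 = (-1) ^ (p2 - 1) * F (ptf N N k)" by (simp add: b_def last)
    also have "(\<Sum>r\<in>{1..p2}. a r) - (-1) ^ (p2 - 1) * F (ptf N N k) = (\<Sum>r\<in>{1..N}. a r)"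
      unfolding s2(1) sum.insert[OF finite_atLeastAtMost s2(2)] by (simp add: a_def pw)
    finally show ?thesis by (simp add: a_def nN)
  qed
qed




definition extT :: "nat \<Rightarrow> (nat \<Rightarrow> int) \<Rightarrow> (nat \<Rightarrow> nat \<Rightarrow> int) \<Rightarrow> (nat \<Rightarrow> nat \<Rightarrow> int)" where
  "extT n k a = (\<lambda>i j. if i = n then (if 1 \<le> j \<and> j \<le> n then k j else 0) else a i j)"

definition cutT :: "nat \<Rightarrow> (nat \<Rightarrow> nat \<Rightarrow> int) \<Rightarrow> (nat \<Rightarrow> nat \<Rightarrow> int)" where
  "cutT n a = (\<lambda>i j. if i = n then 0 else a i j)"

lemma MT_mem: "a \<in> monotone_triangles n k \<longleftrightarrow> monotone_triangle n a \<and> (\<forall>j\<in>{1..n}. a n j = k j)"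
  by (simp add: monotone_triangles_def)

lemma MT_zero: "monotone_triangle n a \<Longrightarrow> \<not> (1 \<le> j \<and> j \<le> i \<and> i \<le> n) \<Longrightarrow> a i j = 0"
  unfolding monotone_triangle_def by blast

lemma MT_mono: "monotone_triangle n a \<Longrightarrow> 2 \<le> i \<Longrightarrow> i \<le> n \<Longrightarrow> 1 \<le> j \<Longrightarrow> j \<le> i - 1 \<Longrightarrow>
    a i j \<le> a (i - 1) j \<and> a (i - 1) j \<le> a i (j + 1)"
  unfolding monotone_triangle_def by blast

lemma MT_strict: "monotone_triangle n a \<Longrightarrow> 1 \<le> j \<Longrightarrow> j < i \<Longrightarrow> i \<le> n \<Longrightarrow> a i j < a i (j + 1)"
  unfolding monotone_triangle_def by blast

lemma row_SS:
  assumes a: "a \<in> monotone_triangles (Suc m) k"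
  shows "(\<lambda>j. a m j) \<in> SS (Suc m) k"
proof -
  have mt: "monotone_triangle (Suc m) a" and bot: "\<And>j. 1 \<le> j \<Longrightarrow> j \<le> Suc m \<Longrightarrow> a (Suc m) j = k j"
    using a by (auto simp: MT_mem)
  have z: "\<forall>j. (j < 1 \<or> Suc m \<le> j) \<longrightarrow> a m j = 0"
    using MT_zero[OF mt] by auto
  have it: "\<forall>j. 1 \<le> j \<and> j < Suc m \<longrightarrow> k j \<le> a m j \<and> a m j \<le> k (Suc j)"
  proof (intro allI impI)
    fix j assume j: "1 \<le> j \<and> j < Suc m"
    have "a (Suc m) j \<le> a (Suc m - 1) j \<and> a (Suc m - 1) j \<le> a (Suc m) (j + 1)"
      by (rule MT_mono[OF mt]) (use j in auto)
    then show "k j \<le> a m j \<and> a m j \<le> k (Suc j)" using bot j by simp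
  qed
  have inc: "\<forall>j. 1 \<le> j \<and> Suc j < Suc m \<longrightarrow> a m j < a m (Suc j)"
    using MT_strict[OF mt] by auto
  show ?thesis unfolding SS_def using z it inc by blast
qed

lemma cut_MT:
  assumes a: "a \<in> monotone_triangles (Suc m) k"
  shows "cutT (Suc m) a \<in> monotone_triangles m (\<lambda>j. a m j)"
proof -
  have mt: "monotone_triangle (Suc m) a" using a by (auto simp: MT_mem)
  have "monotone_triangle m (cutT (Suc m) a)"
    unfolding monotone_triangle_def cutT_def
  proof (intro conjI allI impI)
    fix i j assume "\<not> (1 \<le> j \<and> j \<le> i \<and> i \<le> m)"
    then show "(if i = Suc m then 0 else a i j) = 0" using MT_zero[OF mt, of j i] by auto
  next
    fix i j assume h: "2 \<le> i \<and> i \<le> m \<and> 1 \<le> j \<and> j \<le> i - 1"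
    then show "(if i = Suc m then 0 else a i j) \<le> (if i - 1 = Suc m then 0 else a (i - 1) j)"
      using MT_mono[OF mt, of i j] by auto
  next
    fix i j assume h: "2 \<le> i \<and> i \<le> m \<and> 1 \<le> j \<and> j \<le> i - 1"
    then show "(if i - 1 = Suc m then 0 else a (i - 1) j) \<le> (if i = Suc m then 0 else a i (j + 1))"
      using MT_mono[OF mt, of i j] by auto
  next
    fix i j assume h: "1 \<le> j \<and> j < i \<and> i \<le> m"
    then show "(if i = Suc m then 0 else a i j) < (if i = Suc m then 0 else a i (j + 1))"
      using MT_strict[OF mt, of j i] by auto
  qed
  moreover have "\<forall>j\<in>{1..m}. cutT (Suc m) a m j = a m j" by (simp add: cutT_def)
  ultimately show ?thesis by (simp add: MT_mem)
qed

lemma ext_cut: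
  assumes a: "a \<in> monotone_triangles (Suc m) k"
  shows "extT (Suc m) k (cutT (Suc m) a) = a"
proof -
  have mt: "monotone_triangle (Suc m) a" and bot: "\<forall>j\<in>{1..Suc m}. a (Suc m) j = k j"
    using a by (auto simp: MT_mem)
  show ?thesis
  proof (intro ext)
    fix i j show "extT (Suc m) k (cutT (Suc m) a) i j = a i j"
      using bot MT_zero[OF mt, of j i] by (auto simp: extT_def cutT_def)
  qed
qed

lemma ext_MT:
  assumes st: "strict k (Suc m)" and l: "l \<in> SS (Suc m) k" and b: "b \<in> monotone_triangles m l"
  shows "extT (Suc m) k b \<in> monotone_triangles (Suc m) k"
proof -
  have mt: "monotone_triangle m b" and bot: "\<And>j. 1 \<le> j \<Longrightarrow> j \<le> m \<Longrightarrow> b m j = l j"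
    using b by (auto simp: MT_mem)
  have it: "\<And>j. 1 \<le> j \<Longrightarrow> j < Suc m \<Longrightarrow> k j \<le> l j \<and> l j \<le> k (Suc j)"
    using l unfolding SS_def by auto
  have "monotone_triangle (Suc m) (extT (Suc m) k b)"
    unfolding monotone_triangle_def extT_def
  proof (intro conjI allI impI)
    fix i j assume h: "\<not> (1 \<le> j \<and> j \<le> i \<and> i \<le> Suc m)"
    then show "(if i = Suc m then if 1 \<le> j \<and> j \<le> Suc m then k j else 0 else b i j) = 0"
      using MT_zero[OF mt, of j i] by auto
  next
    fix i j assume h: "2 \<le> i \<and> i \<le> Suc m \<and> 1 \<le> j \<and> j \<le> i - 1"
    show "(if i = Suc m then if 1 \<le> j \<and> j \<le> Suc m then k j else 0 else b i j)
          \<le> (if i - 1 = Suc m then if 1 \<le> j \<and> j \<le> Suc m then k j else 0 else b (i - 1) j)"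
    proof (cases "i = Suc m")
      case True then show ?thesis using h bot[of j] it[of j] by auto
    next
      case False then show ?thesis using h MT_mono[OF mt, of i j] by auto
    qed
  next
    fix i j assume h: "2 \<le> i \<and> i \<le> Suc m \<and> 1 \<le> j \<and> j \<le> i - 1"
    show "(if i - 1 = Suc m then if 1 \<le> j \<and> j \<le> Suc m then k j else 0 else b (i - 1) j)
          \<le> (if i = Suc m then if 1 \<le> j + 1 \<and> j + 1 \<le> Suc m then k (j + 1) else 0 else b i (j + 1))"
    proof (cases "i = Suc m")
      case True then show ?thesis using h bot[of j] it[of j] by auto
    next
      case False then show ?thesis using h MT_mono[OF mt, of i j] by auto
    qed
  next
    fix i j assume h: "1 \<le> j \<and> j < i \<and> i \<le> Suc m"
    show "(if i = Suc m then if 1 \<le> j \<and> j \<le> Suc m then k j else 0 else b i j)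
          < (if i = Suc m then if 1 \<le> j + 1 \<and> j + 1 \<le> Suc m then k (j + 1) else 0 else b i (j + 1))"
    proof (cases "i = Suc m")
      case True then show ?thesis using h st unfolding strict_def by auto
    next
      case False then show ?thesis using h MT_strict[OF mt, of j i] by auto
    qed
  qed
  moreover have "\<forall>j\<in>{1..Suc m}. extT (Suc m) k b (Suc m) j = k j" by (simp add: extT_def)
  ultimately show ?thesis by (simp add: MT_mem)
qed

lemma ext_row:
  assumes l: "l \<in> SS (Suc m) k" and b: "b \<in> monotone_triangles m l"
  shows "(\<lambda>j. extT (Suc m) k b m j) = l"
proof
  fix j
  have mt: "monotone_triangle m b" and bot: "\<forall>j\<in>{1..m}. b m j = l j" using b by (auto simp: MT_mem)
  show "extT (Suc m) k b m j = l j"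
  proof (cases "1 \<le> j \<and> j \<le> m")
    case True then show ?thesis using bot by (simp add: extT_def)
  next
    case False
    then have "b m j = 0" using MT_zero[OF mt, of j m] by auto
    moreover have "l j = 0"
    proof -
      have z: "\<And>j. j < 1 \<or> Suc m \<le> j \<Longrightarrow> l j = 0" using l unfolding SS_def by blast
      show ?thesis using z[of j] False by auto
    qed
    ultimately show ?thesis by (simp add: extT_def)
  qed
qed

lemma ext_inj:
  assumes "b1 \<in> monotone_triangles m l1" "b2 \<in> monotone_triangles m l2"
    and "extT (Suc m) k b1 = extT (Suc m) k b2"
  shows "b1 = b2"
proof (intro ext)
  fix i j
  have z1: "b1 (Suc m) j = 0" and z2: "b2 (Suc m) j = 0"
    using assms(1,2) MT_zero[of m b1 j "Suc m"] MT_zero[of m b2 j "Suc m"] by (auto simp: MT_mem)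
  show "b1 i j = b2 i j"
  proof (cases "i = Suc m")
    case True then show ?thesis using z1 z2 by simp
  next
    case False then show ?thesis using fun_cong[OF fun_cong[OF assms(3), of i], of j] by (simp add: extT_def)
  qed
qed

lemma MT_0: "monotone_triangles 0 k = {\<lambda>_ _. 0}"
  by (auto simp: monotone_triangles_def monotone_triangle_def fun_eq_iff)

lemma MT_sub: "monotone_triangles (Suc m) k \<subseteq> (\<Union>l\<in>SS (Suc m) k. extT (Suc m) k ` monotone_triangles m l)"
proof
  fix a assume a: "a \<in> monotone_triangles (Suc m) k"
  show "a \<in> (\<Union>l\<in>SS (Suc m) k. extT (Suc m) k ` monotone_triangles m l)"
    using row_SS[OF a] cut_MT[OF a] ext_cut[OF a] by (metis UN_iff image_eqI)
qed

lemma finite_MT: "finite (monotone_triangles n k)"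
proof (induction n arbitrary: k)
  case 0 then show ?case by (simp add: MT_0)
next
  case (Suc m)
  show ?case
    by (rule finite_subset[OF MT_sub]) (auto intro!: finite_UN_I finite_SS Suc.IH)
qed

lemma card_MT_rec:
  assumes st: "strict k (Suc m)"
  shows "card (monotone_triangles (Suc m) k) = (\<Sum>l\<in>SS (Suc m) k. card (monotone_triangles m l))"
proof -
  have eq: "monotone_triangles (Suc m) k = (\<Union>l\<in>SS (Suc m) k. extT (Suc m) k ` monotone_triangles m l)"
  proof
    show "monotone_triangles (Suc m) k \<subseteq> (\<Union>l\<in>SS (Suc m) k. extT (Suc m) k ` monotone_triangles m l)"
      by (rule MT_sub)
  next
    show "(\<Union>l\<in>SS (Suc m) k. extT (Suc m) k ` monotone_triangles m l) \<subseteq> monotone_triangles (Suc m) k"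
      using ext_MT[OF st] by blast
  qed
  have "card (\<Union>l\<in>SS (Suc m) k. extT (Suc m) k ` monotone_triangles m l)
      = (\<Sum>l\<in>SS (Suc m) k. card (extT (Suc m) k ` monotone_triangles m l))"
  proof (rule card_UN_disjoint)
    show "finite (SS (Suc m) k)" by (rule finite_SS)
    show "\<forall>l\<in>SS (Suc m) k. finite (extT (Suc m) k ` monotone_triangles m l)"
      by (simp add: finite_MT)
    show "\<forall>l1\<in>SS (Suc m) k. \<forall>l2\<in>SS (Suc m) k. l1 \<noteq> l2 \<longrightarrow>
        extT (Suc m) k ` monotone_triangles m l1 \<inter> extT (Suc m) k ` monotone_triangles m l2 = {}"
    proof (intro ballI impI)
      fix l1 l2 assume l1: "l1 \<in> SS (Suc m) k" and l2: "l2 \<in> SS (Suc m) k" and ne: "l1 \<noteq> l2"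
      show "extT (Suc m) k ` monotone_triangles m l1 \<inter> extT (Suc m) k ` monotone_triangles m l2 = {}"
      proof (rule ccontr)
        assume "extT (Suc m) k ` monotone_triangles m l1 \<inter> extT (Suc m) k ` monotone_triangles m l2 \<noteq> {}"
        then obtain b1 b2 where b1: "b1 \<in> monotone_triangles m l1" and b2: "b2 \<in> monotone_triangles m l2"
          and e: "extT (Suc m) k b1 = extT (Suc m) k b2" by blast
        have "l1 = (\<lambda>j. extT (Suc m) k b1 m j)" using ext_row[OF l1 b1] by simp
        also have "\<dots> = (\<lambda>j. extT (Suc m) k b2 m j)" using e by simp
        also have "\<dots> = l2" using ext_row[OF l2 b2] by simp
        finally show False using ne by simp
      qed
    qed
  qed
  also have "\<dots> = (\<Sum>l\<in>SS (Suc m) k. card (monotone_triangles m l))"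
  proof (rule sum.cong[OF refl])
    fix l assume "l \<in> SS (Suc m) k"
    have "inj_on (extT (Suc m) k) (monotone_triangles m l)"
      by (rule inj_onI) (rule ext_inj)
    then show "card (extT (Suc m) k ` monotone_triangles m l) = card (monotone_triangles m l)"
      by (rule card_image)
  qed
  finally show ?thesis using eq by simp
qed




lemma vdm_Dd: "vdm n = Dd n"
  by (rule ext) (simp add: Dd_vdm)

lemma depon_Gd: "depon {1..m} (Gd m)"
  unfolding depon_def
proof (intro allI impI)
  fix x y :: "nat \<Rightarrow> real" assume xy: "\<forall>i\<in>{1..m}. x i = y i"
  have "bm m 1 x = bm m 1 y"
    by (rule eq_matI) (use xy in \<open>auto simp: bm_def\<close>)
  then show "Gd m x = Gd m y" by (simp add: Gd_def)
qed

lemma KP_main: "KPn m (opl (pairs m) (Gd m))"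
  unfolding KPn_def
proof (intro allI impI)
  fix i and x :: "nat \<Rightarrow> real"
  assume i: "1 \<le> i" "Suc i \<le> m" and xi: "x i = x (Suc i)"
  let ?F = "opl (pairs m) (Gd m)"
  have "opPQ (Suc i) i ?F x = 0"
    by (rule KP_opl[OF i]) (use Gd_sw[OF i] xi in auto)
  moreover have "opPQ (Suc i) i ?F x = ?F x + ?F (x(i := x i + 1, Suc i := x (Suc i) + 1)) - ?F (x(Suc i := x (Suc i) + 1))"
  proof -
    have "(x(Suc i := x (Suc i) + 1))(i := x i + 1) = x(i := x i + 1, Suc i := x (Suc i) + 1)"
      by (auto simp: fun_eq_iff)
    then show ?thesis by (simp add: opPQ_def shiftE_def diffD_def)
  qed
  ultimately show "?F x + ?F (x(i := x i + 1, Suc i := x (Suc i) + 1)) - ?F (x(Suc i := x (Suc i) + 1)) = 0"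
    by simp
qed

lemma pairs_1: "pairs (Suc 0) = []"
  by (simp add: pairs_def)

lemma vdm_1: "vdm (Suc 0) x = 1"
proof -
  have e: "{(i, j). 1 \<le> i \<and> i < j \<and> j \<le> Suc 0} = {}" by auto
  show ?thesis unfolding vdm_def e by simp
qed

lemma SS_strict: "l \<in> SS (Suc m) k \<Longrightarrow> strict l m"
  unfolding SS_def strict_def by auto

lemma face_eval:
  assumes r: "1 \<le> r" "r \<le> Suc m"
  shows "opl (pairs (Suc m)) (\<lambda>x. Gd m (insf r x)) (rl k) = opl (pairs m) (Gd m) (ptf (Suc m) r k)"
proof -
  let ?F = "opl (pairs m) (Gd m)"
  have "opl (pairs (Suc m)) (\<lambda>x. Gd m (insf r x)) (rl k) = shl [r..<Suc m] ?F (insf r (rl k))"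
    using opl_insf[OF r, of "Gd m"] by simp
  also have "\<dots> = ?F (\<lambda>i. if i \<in> set [r..<Suc m] then insf r (rl k) i + 1 else insf r (rl k) i)"
    by (rule shl_eval) simp
  also have "\<dots> = ?F (ptf (Suc m) r k)"
  proof -
    have d: "depon {1..m} ?F" by (rule depon_opl[OF depon_Gd])
    have dd: "\<And>x y. (\<forall>i\<in>{1..m}. x i = y i) \<Longrightarrow> ?F x = ?F y" using d unfolding depon_def by blast
    have pt: "\<forall>i\<in>{1..m}. (if i \<in> set [r..<Suc m] then insf r (rl k) i + 1 else insf r (rl k) i) = ptf (Suc m) r k i"
    proof
      fix i assume i: "i \<in> {1..m}"
      show "(if i \<in> set [r..<Suc m] then insf r (rl k) i + 1 else insf r (rl k) i) = ptf (Suc m) r k i"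
      proof (cases "i < r")
        case True
        then have "i \<notin> set [r..<Suc m]" by simp
        then show ?thesis using True i by (simp add: insf_def rl_def ptf_def)
      next
        case False
        then have "i \<in> set [r..<Suc m]" using i by auto
        then show ?thesis using False i by (simp add: insf_def rl_def ptf_def)
      qed
    qed
    show ?thesis by (rule dd) (rule pt)
  qed
  finally show ?thesis .
qed

lemma main_thm:
  assumes "1 \<le> n" "strict k n"
  shows "real (card (monotone_triangles n k)) = fischer_op n (vdm n) (rl k)"
  using assms
proof (induction n arbitrary: k rule: less_induct)
  case (less n)
  obtain m where n: "n = Suc m" using less.prems(1) by (metis Suc_le_D One_nat_def)
  show ?case
  proof (cases m)
    case 0
    have "card (monotone_triangles (Suc 0) k) = (\<Sum>l\<in>SS (Suc 0) k. card (monotone_triangles 0 l))"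
      by (rule card_MT_rec) (simp add: strict_def)
    also have "\<dots> = 1" by (simp add: SS_1 MT_0)
    finally show ?thesis using n 0 by (simp add: fischer_op_opl pairs_1 vdm_1)
  next
    case (Suc m')
    have m1: "1 \<le> m" using Suc by simp
    let ?F = "opl (pairs m) (Gd m)"
    have "real (card (monotone_triangles (Suc m) k)) = (\<Sum>l\<in>SS (Suc m) k. real (card (monotone_triangles m l)))"
      using card_MT_rec[of k m] less.prems(2) n by simp
    also have "\<dots> = (\<Sum>l\<in>SS (Suc m) k. fischer_op m (vdm m) (rl l))"
    proof (rule sum.cong[OF refl])
      fix l assume l: "l \<in> SS (Suc m) k"
      show "real (card (monotone_triangles m l)) = fischer_op m (vdm m) (rl l)"
        by (rule less.IH) (use n m1 SS_strict[OF l] in auto)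
    qed
    also have "\<dots> = (\<Sum>l\<in>SS (Suc m) k. diffsn (Suc m - 1) ?F (rl l))"
      by (simp add: fischer_op_opl vdm_Dd diffsn_Gd[symmetric] opl_diffsn)
    also have "\<dots> = (\<Sum>r\<in>{1..Suc m}. (-1) ^ (r - 1) * ?F (ptf (Suc m) r k))"
      by (rule main_sum) (use less.prems n KP_main in auto)
    also have "\<dots> = fischer_op (Suc m) (vdm (Suc m)) (rl k)"
    proof -
      have "fischer_op (Suc m) (vdm (Suc m)) = opl (pairs (Suc m)) (\<lambda>x. \<Sum>r\<in>{1..Suc m}. (-1) ^ (r - 1) * Gd m (insf r x))"
      proof -
        have D: "Dd (Suc m) = (\<lambda>x. \<Sum>r\<in>{1..Suc m}. (-1) ^ (r - 1) * Gd m (insf r x))"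
        proof (rule ext)
          fix x
          show "Dd (Suc m) x = (\<Sum>r\<in>{1..Suc m}. (-1) ^ (r - 1) * Gd m (insf r x))"
            using Dd_laplace[of "Suc m" x] by simp
        qed
        show ?thesis by (simp only: fischer_op_opl vdm_Dd D)
      qed
      also have "\<dots> = (\<lambda>x. \<Sum>r\<in>{1..Suc m}. opl (pairs (Suc m)) (\<lambda>x. (-1) ^ (r - 1) * Gd m (insf r x)) x)"
        by (rule linop_sum[OF linop_opl]) simp
      also have "\<dots> = (\<lambda>x. \<Sum>r\<in>{1..Suc m}. (-1) ^ (r - 1) * opl (pairs (Suc m)) (\<lambda>x. Gd m (insf r x)) x)"
        by (simp add: linop_scale[OF linop_opl])
      finally have "fischer_op (Suc m) (vdm (Suc m)) (rl k) = (\<Sum>r\<in>{1..Suc m}. (-1) ^ (r - 1) * opl (pairs (Suc m)) (\<lambda>x. Gd m (insf r x)) (rl k))"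
        by simp
      also have "\<dots> = (\<Sum>r\<in>{1..Suc m}. (-1) ^ (r - 1) * ?F (ptf (Suc m) r k))"
        by (rule sum.cong[OF refl]) (simp add: face_eval)
      finally show ?thesis by simp
    qed
    finally show ?thesis using n by simp
  qed
qed

theorem theorem1:
  fixes n :: nat and k :: "nat \<Rightarrow> int"
  assumes "n \<ge> 1"
    and "\<And>i j. 1 \<le> i \<Longrightarrow> i < j \<Longrightarrow> j \<le> n \<Longrightarrow> k i < k j"
  shows "real (card (monotone_triangles n k)) = fischer_op n (vdm n) (\<lambda>i. real_of_int (k i))"
proof -
  have "strict k n" unfolding strict_def using assms(2) by auto
  then show ?thesis using main_thm[OF assms(1)] by (simp add: rl_def)
qed


end
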